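(* Let $\varepsilon>0$ and let $G:\mathbb{R}\to\mathbb{R}$ satisfy: $G\ge 0$ and $\mathrm{supp}(G)=\mathbb{R}$; $G\in W^{1,1}(\mathbb{R})\cap L^\infty(\mathbb{R})\cap C^2(\mathbb{R})$; $G(x)=g(|x|)$ with $g'(r)<0$ for all $r>0$, $g''(0)<0$, $\lim_{r\to+\infty}g(r)=0$; and $\int G=1$. Let $\rho\in L^2(\mathbb{R})\cap\mathcal{P}$ be a stationary solution in one space dimension, i.e. $$\rho\,\partial_x(\varepsilon\rho-G*\rho)=0\quad\text{a.e. on }\mathbb{R}.$$ Then $\mathrm{supp}(\rho)$ is a connected set.
   Context: $\mathcal{P}=\{\rho\in L^1(\mathbb{R}):\rho\ge0,\ \int_{\mathbb{R}}\rho\,dx=1\}$. $G*\rho(x)=\int G(x-y)\rho(y)\,dy$. *)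

theory Defs
  imports "HOL-Analysis.Analysis"
begin

definition conv :: "(real \<Rightarrow> real) \<Rightarrow> (real \<Rightarrow> real) \<Rightarrow> real \<Rightarrow> real" where
  "conv G \<rho> x = (LINT y|lborel. G (x - y) * \<rho> y)"

definition test_fun :: "(real \<Rightarrow> real) \<Rightarrow> bool" where
  "test_fun \<phi> \<longleftrightarrow>
     (\<forall>k x. ((deriv ^^ k) \<phi> has_real_derivative (deriv ^^ Suc k) \<phi> x) (at x)) \<and>
     bounded {x. \<phi> x \<noteq> 0}"

definition locally_integrable :: "(real \<Rightarrow> real) \<Rightarrow> bool" where
  "locally_integrable u \<longleftrightarrow> u \<in> borel_measurable lborel \<and>
     (\<forall>K. compact K \<longrightarrow> set_integrable lborel K u)"

definition weak_deriv :: "(real \<Rightarrow> real) \<Rightarrow> (real \<Rightarrow> real) \<Rightarrow> bool" where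
  "weak_deriv u w \<longleftrightarrow> locally_integrable u \<and> locally_integrable w \<and>
     (\<forall>\<phi>. test_fun \<phi> \<longrightarrow>
        (LINT x|lborel. u x * deriv \<phi> x) = - (LINT x|lborel. w x * \<phi> x))"

definition esssupp :: "(real \<Rightarrow> real) \<Rightarrow> real set" where
  "esssupp f = - \<Union>{U. open U \<and> (AE x in lborel. x \<in> U \<longrightarrow> f x = 0)}"

end

theory Submission
  imports Defs "HOL-Computational_Algebra.Polynomial"
begin

definition Ple :: "nat \<Rightarrow> (real \<Rightarrow> real) \<Rightarrow> bool" where
  "Ple k h \<longleftrightarrow> (\<forall>j\<le>k. \<forall>x. ((deriv ^^ j) h has_real_derivative (deriv ^^ Suc j) h x) (at x))"

definition cinf :: "(real \<Rightarrow> real) \<Rightarrow> bool" where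
  "cinf f \<longleftrightarrow> (\<forall>k x. ((deriv ^^ k) f has_real_derivative (deriv ^^ Suc k) f x) (at x))"

lemma cinf_Ple: "cinf f \<longleftrightarrow> (\<forall>k. Ple k f)"
  unfolding cinf_def Ple_def by blast

lemma Ple_0: "Ple 0 h \<longleftrightarrow> (\<forall>x. (h has_real_derivative deriv h x) (at x))"
  unfolding Ple_def by simp

lemma Ple_Suc: "Ple (Suc k) h \<longleftrightarrow> Ple 0 h \<and> Ple k (deriv h)"
proof -
  have e: "(deriv ^^ Suc j) h = (deriv ^^ j) (deriv h)" for j
    by (simp add: funpow_Suc_right del: funpow.simps)
  show ?thesis
    unfolding Ple_def
  proof safe
    fix j x assume "\<forall>j\<le>Suc k. \<forall>x. ((deriv ^^ j) h has_real_derivative (deriv ^^ Suc j) h x) (at x)" "j \<le> k"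
    then have "((deriv ^^ Suc j) h has_real_derivative (deriv ^^ Suc (Suc j)) h x) (at x)" by auto
    then show "((deriv ^^ j) (deriv h) has_real_derivative (deriv ^^ Suc j) (deriv h) x) (at x)"
      by (simp only: e)
  next
    fix j x assume A: "\<forall>j\<le>0. \<forall>x. ((deriv ^^ j) h has_real_derivative (deriv ^^ Suc j) h x) (at x)"
      and B: "\<forall>j\<le>k. \<forall>x. ((deriv ^^ j) (deriv h) has_real_derivative (deriv ^^ Suc j) (deriv h) x) (at x)"
      and j: "j \<le> Suc k"
    show "((deriv ^^ j) h has_real_derivative (deriv ^^ Suc j) h x) (at x)"
    proof (cases j)
      case 0 then show ?thesis using A by auto
    next
      case (Suc i)
      then have "i \<le> k" using j by simp
      then have "((deriv ^^ i) (deriv h) has_real_derivative (deriv ^^ Suc i) (deriv h) x) (at x)"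
        using B by auto
      then show ?thesis using Suc by (simp only: e)
    qed
  qed (erule allE[of _ 0], simp)
qed

lemma Ple_mono: "Ple k h \<Longrightarrow> j \<le> k \<Longrightarrow> Ple j h"
  unfolding Ple_def by auto

lemma deriv_eqI: "(\<And>x. (h has_real_derivative D x) (at x)) \<Longrightarrow> deriv h = D"
  by (rule ext) (rule DERIV_imp_deriv)

lemma Ple0I: assumes "(\<And>x. (h has_real_derivative D x) (at x))" shows "Ple 0 h"
proof -
  have "deriv h = D" by (rule deriv_eqI) fact
  then show ?thesis unfolding Ple_0 using assms by simp
qed

lemma Ple_SucI: assumes "(\<And>x. (h has_real_derivative D x) (at x))" "Ple k D" shows "Ple (Suc k) h"
proof -
  have "deriv h = D" by (rule deriv_eqI) fact
  then show ?thesis unfolding Ple_Suc using assms Ple0I by metis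
qed

lemma Ple0_D: "Ple k h \<Longrightarrow> (h has_real_derivative deriv h x) (at x)"
  using Ple_mono[of k h 0] unfolding Ple_0 by auto

lemma Ple_const: "Ple k (\<lambda>x. c)"
proof (induction k arbitrary: c)
  case 0 show ?case by (rule Ple0I[of _ "\<lambda>x. 0"]) auto
next
  case (Suc k) show ?case by (rule Ple_SucI[of _ "\<lambda>x. 0"]) (auto simp: Suc)
qed

lemma Ple_add: "Ple k f \<Longrightarrow> Ple k g \<Longrightarrow> Ple k (\<lambda>x. f x + g x)"
proof (induction k arbitrary: f g)
  case 0
  then show ?case by (intro Ple0I[of _ "\<lambda>x. deriv f x + deriv g x"] DERIV_add Ple0_D)
next
  case (Suc k)
  have "Ple k (\<lambda>x. deriv f x + deriv g x)"
    using Suc by (intro Suc.IH) (auto simp: Ple_Suc)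
  then show ?case using Suc.prems
    by (intro Ple_SucI[of _ "\<lambda>x. deriv f x + deriv g x"] DERIV_add Ple0_D) auto
qed

lemma Ple_mult: "Ple k f \<Longrightarrow> Ple k g \<Longrightarrow> Ple k (\<lambda>x. f x * g x)"
proof (induction k arbitrary: f g)
  case 0
  then show ?case by (intro Ple0I[of _ "\<lambda>x. deriv f x * g x + deriv g x * f x"] DERIV_mult Ple0_D)
next
  case (Suc k)
  have fk: "Ple k f" "Ple k g" using Suc.prems Ple_mono by auto
  have "Ple k (\<lambda>x. deriv f x * g x)" "Ple k (\<lambda>x. deriv g x * f x)"
    using Suc.prems fk by (auto intro!: Suc.IH simp: Ple_Suc)
  then have "Ple k (\<lambda>x. deriv f x * g x + deriv g x * f x)" by (rule Ple_add)
  then show ?case using Suc.prems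
    by (intro Ple_SucI[of _ "\<lambda>x. deriv f x * g x + deriv g x * f x"] DERIV_mult Ple0_D) auto
qed

lemma Ple_cmult: "Ple k f \<Longrightarrow> Ple k (\<lambda>x. c * f x)"
  using Ple_mult[OF Ple_const] .

lemma Ple_affine: "Ple k f \<Longrightarrow> Ple k (\<lambda>x. f (a * x + b))"
proof (induction k arbitrary: f)
  case 0
  have "((\<lambda>x. f (a * x + b)) has_real_derivative deriv f (a * x + b) * a) (at x)" for x
    by (rule DERIV_chain2[OF Ple0_D[OF 0]]) (auto intro!: derivative_eq_intros)
  then show ?case by (intro Ple0I) auto
next
  case (Suc k)
  have l: "((\<lambda>x. a * x + b) has_real_derivative a) (at x)" for x
    by (auto intro!: derivative_eq_intros)
  have d: "((\<lambda>x. f (a * x + b)) has_real_derivative deriv f (a * x + b) * a) (at x)" for x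
    by (rule DERIV_chain2[OF Ple0_D[OF Suc.prems] l])
  have "Ple k (\<lambda>x. deriv f (a * x + b))" using Suc by (auto simp: Ple_Suc)
  then have "Ple k (\<lambda>x. deriv f (a * x + b) * a)" using Ple_mult[OF _ Ple_const] by blast
  then show ?case by (intro Ple_SucI[OF d])
qed

lemma cinf_add: "cinf f \<Longrightarrow> cinf g \<Longrightarrow> cinf (\<lambda>x. f x + g x)"
  by (simp add: cinf_Ple Ple_add)
lemma cinf_mult: "cinf f \<Longrightarrow> cinf g \<Longrightarrow> cinf (\<lambda>x. f x * g x)"
  by (simp add: cinf_Ple Ple_mult)
lemma cinf_cmult: "cinf f \<Longrightarrow> cinf (\<lambda>x. c * f x)"
  by (simp add: cinf_Ple Ple_cmult)
lemma cinf_affine: "cinf f \<Longrightarrow> cinf (\<lambda>x. f (a * x + b))"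
  by (simp add: cinf_Ple Ple_affine)
lemma cinf_diff: "cinf f \<Longrightarrow> cinf g \<Longrightarrow> cinf (\<lambda>x. f x - g x)"
  using cinf_add[of f "\<lambda>x. (-1) * g x"] cinf_cmult[of g "-1"] by simp

lemma cinf_antideriv: "(\<And>x. (f has_real_derivative D x) (at x)) \<Longrightarrow> cinf D \<Longrightarrow> cinf f"
proof -
  assume d: "\<And>x. (f has_real_derivative D x) (at x)" and c: "cinf D"
  show "cinf f" unfolding cinf_Ple
  proof
    fix k show "Ple k f"
    proof (cases k)
      case 0 then show ?thesis using Ple0I[OF d] by simp
    next
      case (Suc j) then show ?thesis using Ple_SucI[OF d] c by (simp add: cinf_Ple)
    qed
  qed
qed

lemma cinf_D: "cinf f \<Longrightarrow> (f has_real_derivative deriv f x) (at x)"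
  by (simp add: cinf_Ple Ple0_D)

lemma cinf_deriv: "cinf f \<Longrightarrow> cinf (deriv f)"
  by (simp add: cinf_Ple) (metis Ple_Suc)

lemma test_fun_iff: "test_fun \<phi> \<longleftrightarrow> cinf \<phi> \<and> bounded {x. \<phi> x \<noteq> 0}"
  unfolding test_fun_def cinf_def ..

definition E :: "real poly \<Rightarrow> real \<Rightarrow> real" where
  "E p x = (if x > 0 then poly p (1/x) * exp (-1/x) else 0)"
definition Dp :: "real poly \<Rightarrow> real poly" where
  "Dp p = [:0,0,1:] * (p - pderiv p)"

lemma poly_exp_lim: "((\<lambda>y. poly (q::real poly) y * exp (-y)) \<longlongrightarrow> 0) at_top"
proof -
  have e: "poly q y * exp (-y) = (\<Sum>i\<le>degree q. coeff q i * (y ^ i / exp y))" for y :: real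
  proof -
    have "poly q y * exp (-y) = poly q y / exp y" by (simp add: exp_minus field_simps)
    also have "\<dots> = (\<Sum>i\<le>degree q. coeff q i * y ^ i) / exp y" by (simp add: poly_altdef)
    also have "\<dots> = (\<Sum>i\<le>degree q. coeff q i * (y ^ i / exp y))"
      by (simp add: sum_divide_distrib)
    finally show ?thesis .
  qed
  have "((\<lambda>y. (\<Sum>i\<le>degree q. coeff q i * (y ^ i / exp y))) \<longlongrightarrow> (\<Sum>i\<le>degree q. coeff q i * 0)) at_top"
    by (intro tendsto_intros tendsto_power_div_exp_0)
  then show ?thesis by (simp add: e)
qed

lemma E_lim: "((\<lambda>h. poly (q::real poly) (1/h) * exp (-1/h)) \<longlongrightarrow> 0) (at_right 0)"
proof -
  have "((\<lambda>h. poly q (inverse h) * exp (- inverse h)) \<longlongrightarrow> 0) (at_right (0::real))"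
    using filterlim_compose[OF poly_exp_lim filterlim_inverse_at_top_right] by simp
  then show ?thesis by (simp add: divide_inverse)
qed

lemma E_deriv: "(E p has_real_derivative E (Dp p) x) (at x)"
proof (cases "x > 0")
  case True
  have i: "((\<lambda>x. 1/x) has_real_derivative - 1 / x^2) (at x)"
    using True by (auto intro!: derivative_eq_intros simp: power2_eq_square)
  have i2: "((\<lambda>x. -1/x) has_real_derivative 1 / x^2) (at x)"
    using True by (auto intro!: derivative_eq_intros simp: power2_eq_square)
  have a: "((\<lambda>x. poly p (1/x)) has_real_derivative poly (pderiv p) (1/x) * (- 1 / x^2)) (at x)"
    by (rule DERIV_chain2[OF poly_DERIV i])
  have b: "((\<lambda>x. exp (-1/x)) has_real_derivative exp (-1/x) * (1 / x^2)) (at x)"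
    by (rule DERIV_chain2[OF DERIV_exp i2])
  have "((\<lambda>x. poly p (1/x) * exp (-1/x)) has_real_derivative
        poly (pderiv p) (1/x) * (- 1 / x^2) * exp (-1/x) + exp (-1/x) * (1 / x^2) * poly p (1/x)) (at x)"
    by (rule DERIV_mult[OF a b])
  moreover have "poly (pderiv p) (1/x) * (- 1 / x^2) * exp (-1/x) + exp (-1/x) * (1 / x^2) * poly p (1/x)
      = E (Dp p) x"
    using True by (simp add: E_def Dp_def field_simps power2_eq_square)
  ultimately have "((\<lambda>x. poly p (1/x) * exp (-1/x)) has_real_derivative E (Dp p) x) (at x)" by simp
  then show ?thesis
    by (rule has_field_derivative_transform_within_open[where S="{0<..}"]) (use True in \<open>auto simp: E_def\<close>)
next
  case False
  show ?thesis
  proof (cases "x < 0")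
    case True
    have "((\<lambda>x. 0) has_real_derivative E (Dp p) x) (at x)" using True by (simp add: E_def)
    then show ?thesis
      by (rule has_field_derivative_transform_within_open[where S="{..<0}"]) (use True in \<open>auto simp: E_def\<close>)
  next
    case False
    then have x0: "x = 0" using \<open>\<not> x > 0\<close> by simp
    have r: "((\<lambda>h. (E p (0 + h) - E p 0) / h) \<longlongrightarrow> 0) (at_right 0)"
    proof -
      have "((\<lambda>h. poly ([:0,1:] * p) (1/h) * exp (-1/h)) \<longlongrightarrow> 0) (at_right 0)" by (rule E_lim)
      moreover have "eventually (\<lambda>h. poly ([:0,1:] * p) (1/h) * exp (-1/h) = (E p (0 + h) - E p 0) / h) (at_right 0)"
        by (auto simp: eventually_at_right_less E_def field_simps intro!: eventually_mono[OF eventually_at_right_less])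
      ultimately show ?thesis by (rule Lim_transform_eventually)
    qed
    have l: "((\<lambda>h. (E p (0 + h) - E p 0) / h) \<longlongrightarrow> 0) (at_left 0)"
    proof -
      have "eventually (\<lambda>h. 0 = (E p (0 + h) - E p 0) / h) (at_left (0::real))"
        by (auto simp: E_def intro!: eventually_mono[OF eventually_at_left_real[of "-1" 0]])
      then show ?thesis by (rule Lim_transform_eventually[rotated]) simp
    qed
    have "E (Dp p) 0 = 0" by (simp add: E_def)
    then show ?thesis unfolding x0 DERIV_def using filterlim_split_at[OF l r] by simp
  qed
qed

lemma cinf_E: "cinf (E p)"
proof -
  have eq: "(deriv ^^ k) (E p) = E ((Dp ^^ k) p)" for k
  proof (induction k)
    case (Suc k) then show ?case using deriv_eqI[OF E_deriv] by simp
  qed simp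
  show ?thesis unfolding cinf_def
  proof (intro allI)
    fix k x
    have s: "(deriv ^^ Suc k) (E p) = E (Dp ((Dp^^k) p))" using eq[of "Suc k"] by simp
    show "((deriv ^^ k) (E p) has_real_derivative (deriv ^^ Suc k) (E p) x) (at x)"
      by (simp only: s eq) (simp add: E_deriv)
  qed
qed

definition bump :: "real \<Rightarrow> real" where "bump x = E 1 x * E 1 (1 - x)"

lemma bump_eq: "bump x = (if 0 < x \<and> x < 1 then exp (-1/x) * exp (-1/(1-x)) else 0)"
  by (simp add: bump_def E_def)

lemma cinf_bump: "cinf bump"
proof -
  have "cinf (\<lambda>x. E 1 x * E 1 ((-1) * x + 1))"
    by (rule cinf_mult[OF cinf_E cinf_affine[OF cinf_E]])
  moreover have "(\<lambda>x. E 1 x * E 1 ((-1) * x + 1)) = bump" by (auto simp: bump_def)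
  ultimately show ?thesis by simp
qed

lemma bump_nonneg: "bump x \<ge> 0" by (simp add: bump_eq)
lemma bump_pos: "0 < x \<Longrightarrow> x < 1 \<Longrightarrow> bump x > 0" by (simp add: bump_eq)
lemma bump_zero: "x \<le> 0 \<or> 1 \<le> x \<Longrightarrow> bump x = 0" by (auto simp: bump_eq)

lemma cinf_cont: "cinf f \<Longrightarrow> continuous_on UNIV f"
  by (meson DERIV_isCont cinf_D continuous_at_imp_continuous_on)

lemma antideriv_zero:
  fixes f :: "real \<Rightarrow> real"
  assumes z: "\<And>x. x \<le> 0 \<Longrightarrow> f x = 0" and x: "x \<le> 0"
  shows "integral {-2..x} f = (0::real)"
proof -
  have "integral {-2..x} f = integral {-2..x} (\<lambda>_. 0::real)"
    by (rule integral_cong) (use x z in auto)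
  then show ?thesis by simp
qed

lemma antideriv_has:
  fixes f :: "real \<Rightarrow> real"
  assumes c: "continuous_on UNIV f" and z: "\<And>x. x \<le> 0 \<Longrightarrow> f x = 0"
  shows "((\<lambda>x. integral {-2..x} f) has_real_derivative f x) (at x)"
proof (cases "x > -2")
  case True
  have "((\<lambda>u. integral {-2..u} f) has_vector_derivative f x) (at x within {-2..x+1})"
    by (rule integral_has_vector_derivative) (use True c in \<open>auto intro: continuous_on_subset\<close>)
  moreover have "at x within {-2..x+1} = at x" using True by (intro at_within_Icc_at) auto
  ultimately show ?thesis by (simp add: has_real_derivative_iff_has_vector_derivative)
next
  case False
  have "((\<lambda>_. 0) has_real_derivative f x) (at x)" using False z by simp
  then show ?thesis
    by (rule has_field_derivative_transform_within_open[where S="{..<0}"])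
       (use False antideriv_zero[OF z] in force)+
qed

lemma antideriv_const:
  fixes f :: "real \<Rightarrow> real"
  assumes c: "continuous_on UNIV f" and o: "\<And>x. x \<ge> 1 \<Longrightarrow> f x = k" and x: "x \<ge> 1"
  shows "integral {-2..x} f = integral {-2..1} f + k * (x - 1)"
proof -
  have "integral {-2..1} f + integral {1..x} f = integral {-2..x} f"
    using Henstock_Kurzweil_Integration.integral_combine[where a="-2" and c=1 and b=x and f=f] x c by (auto intro: integrable_continuous_interval continuous_on_subset)
  moreover have "integral {1..x} f = integral {1..x} (\<lambda>_. k)"
    by (rule integral_cong) (use o in auto)
  ultimately show ?thesis using x by (simp add: mult.commute)
qed

definition S0 :: "real \<Rightarrow> real" where "S0 x = integral {-2..x} bump"
definition Sst :: "real \<Rightarrow> real" where "Sst x = S0 x / S0 1"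
definition Tst :: "real \<Rightarrow> real" where "Tst x = integral {-2..x} Sst"

lemma bump_cont: "continuous_on UNIV bump" by (rule cinf_cont[OF cinf_bump])

lemma S0_pos: "S0 1 > 0"
proof -
  have ge: "S0 1 \<ge> 0" unfolding S0_def
    by (rule integral_nonneg) (auto intro: integrable_continuous_interval continuous_on_subset[OF bump_cont] bump_nonneg)
  have "S0 1 \<noteq> 0"
  proof
    assume "S0 1 = 0"
    then have "\<forall>x\<in>{-2..1}. bump x = 0" unfolding S0_def
      using integral_eq_0_iff[of "-2" 1 bump] bump_nonneg continuous_on_subset[OF bump_cont] by auto
    then have "bump (1/2) = 0" by auto
    then show False using bump_pos[of "1/2"] by simp
  qed
  with ge show ?thesis by simp
qed

lemma Sst_deriv: "(Sst has_real_derivative bump x / S0 1) (at x)"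
  unfolding Sst_def[abs_def] S0_def
  by (intro DERIV_cdivide antideriv_has bump_cont) (simp add: bump_zero)

lemma cinf_Sst: "cinf Sst"
proof -
  have "cinf (\<lambda>x. (1 / S0 1) * bump x)" by (rule cinf_cmult[OF cinf_bump])
  then have "cinf (\<lambda>x. bump x / S0 1)" by simp
  then show ?thesis by (rule cinf_antideriv[OF Sst_deriv])
qed

lemma Sst_cont: "continuous_on UNIV Sst" by (rule cinf_cont[OF cinf_Sst])
lemma Sst_zero: "x \<le> 0 \<Longrightarrow> Sst x = 0"
  unfolding Sst_def S0_def by (simp add: antideriv_zero bump_zero)
lemma Sst_one: "x \<ge> 1 \<Longrightarrow> Sst x = 1"
  unfolding Sst_def S0_def using antideriv_const[OF bump_cont, of 0 x] S0_pos
  by (simp add: bump_zero S0_def)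
lemma Sst_nonneg: "Sst x \<ge> 0"
  unfolding Sst_def S0_def using S0_pos
  by (intro divide_nonneg_pos integral_nonneg)
     (auto intro: integrable_continuous_interval continuous_on_subset[OF bump_cont] bump_nonneg simp: S0_def)
lemma Sst_le1: "Sst x \<le> 1"
proof (cases "x \<ge> 1")
  case True then show ?thesis by (simp add: Sst_one)
next
  case False
  have "integral {-2..x} bump \<le> integral {-2..1} bump"
    by (rule integral_subset_le) (use False in \<open>auto intro: integrable_continuous_interval continuous_on_subset[OF bump_cont] bump_nonneg\<close>)
  then show ?thesis using S0_pos unfolding Sst_def S0_def by simp
qed

lemma Tst_deriv: "(Tst has_real_derivative Sst x) (at x)"
  unfolding Tst_def[abs_def] by (intro antideriv_has Sst_cont Sst_zero)
lemma cinf_Tst: "cinf Tst" by (rule cinf_antideriv[OF Tst_deriv cinf_Sst])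
lemma Tst_zero: "x \<le> 0 \<Longrightarrow> Tst x = 0"
  unfolding Tst_def by (simp add: antideriv_zero Sst_zero)
lemma Tst_lin: "x \<ge> 1 \<Longrightarrow> Tst x = Tst 1 + (x - 1)"
  unfolding Tst_def using antideriv_const[OF Sst_cont, of 1 x] by (simp add: Sst_one)

definition Aw :: "real \<Rightarrow> real \<Rightarrow> real \<Rightarrow> real \<Rightarrow> real" where
  "Aw a b d x = d * (Tst ((x - a) / d) - Tst ((x - b) / d))"
definition Bw :: "real \<Rightarrow> real \<Rightarrow> real \<Rightarrow> real \<Rightarrow> real" where
  "Bw a b d x = Sst ((x - a) / d) - Sst ((x - b) / d)"

lemma Tst_aff_deriv: "d > 0 \<Longrightarrow> ((\<lambda>x. d * Tst ((x - a) / d)) has_real_derivative Sst ((x - a) / d)) (at x)"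
proof -
  assume d: "d > 0"
  have "((\<lambda>x. (x - a) / d) has_real_derivative 1 / d) (at x)"
    using d by (auto intro!: derivative_eq_intros)
  from DERIV_chain2[OF Tst_deriv this]
  have "((\<lambda>x. Tst ((x - a) / d)) has_real_derivative Sst ((x - a) / d) * (1/d)) (at x)" .
  from DERIV_cmult[OF this, of d] show ?thesis using d by simp
qed

lemma Aw_deriv: assumes d: "d > 0" shows "(Aw a b d has_real_derivative Bw a b d x) (at x)"
  unfolding Aw_def[abs_def] Bw_def right_diff_distrib
  by (intro DERIV_diff Tst_aff_deriv d)

lemma cinf_aff: "cinf f \<Longrightarrow> d > 0 \<Longrightarrow> cinf (\<lambda>x. f ((x - a) / d))"
proof -
  assume f: "cinf f" and d: "d > 0"
  have "cinf (\<lambda>x. f ((1/d) * x + (- a / d)))" by (rule cinf_affine[OF f])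
  moreover have "(\<lambda>x. f ((1/d) * x + (- a / d))) = (\<lambda>x. f ((x - a) / d))"
    using d by (auto simp: field_simps)
  ultimately show ?thesis by simp
qed

lemma cinf_Bw: "d > 0 \<Longrightarrow> cinf (Bw a b d)"
  unfolding Bw_def[abs_def] by (intro cinf_diff cinf_aff cinf_Sst)

lemma cinf_Aw: "d > 0 \<Longrightarrow> cinf (Aw a b d)"
  by (rule cinf_antideriv[OF Aw_deriv cinf_Bw])

lemma Aw_left: "d > 0 \<Longrightarrow> a \<le> b \<Longrightarrow> x \<le> a \<Longrightarrow> Aw a b d x = 0"
  unfolding Aw_def by (simp add: Tst_zero divide_nonpos_pos)

lemma Aw_right: "d > 0 \<Longrightarrow> a \<le> b \<Longrightarrow> x \<ge> b + d \<Longrightarrow> Aw a b d x = b - a"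
proof -
  assume d: "d > 0" "a \<le> b" "x \<ge> b + d"
  have 1: "(x - a) / d \<ge> 1" "(x - b) / d \<ge> 1" using d by (auto simp: field_simps)
  show ?thesis unfolding Aw_def using Tst_lin[OF 1(1)] Tst_lin[OF 1(2)] d
    by (simp add: field_simps)
qed

lemma Bw_bound: "\<bar>Bw a b d x\<bar> \<le> 1"
  unfolding Bw_def using Sst_nonneg Sst_le1 by (simp add: abs_le_iff) (smt (verit) Sst_nonneg Sst_le1)

lemma Bw_lim: "d > 0 \<Longrightarrow> a \<le> b \<Longrightarrow> x \<le> a \<or> x \<ge> b + d \<Longrightarrow> Bw a b d x = 0"
  unfolding Bw_def using Sst_zero Sst_one
  by (auto simp: divide_nonpos_pos field_simps)

definition Phi :: "real \<Rightarrow> real \<Rightarrow> real \<Rightarrow> real \<Rightarrow> real \<Rightarrow> real \<Rightarrow> real" where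
  "Phi a b a' b' d x = (b' - a') * Aw a b d x - (b - a) * Aw a' b' d x"
definition Psi :: "real \<Rightarrow> real \<Rightarrow> real \<Rightarrow> real \<Rightarrow> real \<Rightarrow> real \<Rightarrow> real" where
  "Psi a b a' b' d x = (b' - a') * Bw a b d x - (b - a) * Bw a' b' d x"

lemma Phi_deriv: "d > 0 \<Longrightarrow> (Phi a b a' b' d has_real_derivative Psi a b a' b' d x) (at x)"
  unfolding Phi_def[abs_def] Psi_def by (intro DERIV_diff DERIV_cmult Aw_deriv)

lemma deriv_Phi: "d > 0 \<Longrightarrow> deriv (Phi a b a' b' d) = Psi a b a' b' d"
  by (rule deriv_eqI[OF Phi_deriv])

lemma test_funI: "cinf f \<Longrightarrow> (\<And>x. x < m \<or> x > M \<Longrightarrow> f x = 0) \<Longrightarrow> test_fun f"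
proof -
  assume c: "cinf f" and z: "\<And>x. x < m \<or> x > M \<Longrightarrow> f x = 0"
  have "{x. f x \<noteq> 0} \<subseteq> {m..M}" using z by (metis (mono_tags) atLeastAtMost_iff mem_Collect_eq not_le subsetI)
  then show ?thesis unfolding test_fun_iff using c bounded_subset[OF bounded_closed_interval[of m M]] by blast
qed

lemma test_Phi:
  assumes "d > 0" "a \<le> b" "a' \<le> b'"
  shows "test_fun (Phi a b a' b' d)"
proof (rule test_funI[where m="min a a'" and M="max b b' + d"])
  show "cinf (Phi a b a' b' d)"
    unfolding Phi_def[abs_def] using assms by (intro cinf_diff cinf_cmult cinf_Aw)
  fix x assume x: "x < min a a' \<or> x > max b b' + d"
  show "Phi a b a' b' d x = 0"
  proof (cases "x < min a a'")
    case True then show ?thesis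
      using assms Aw_left[of d a b x] Aw_left[of d a' b' x] unfolding Phi_def by auto
  next
    case False
    have e1: "Aw a b d x = b - a" "Aw a' b' d x = b' - a'"
      using False x assms Aw_right[of d a b x] Aw_right[of d a' b' x] by auto
    show ?thesis unfolding Phi_def e1 by (simp add: algebra_simps)
  qed
qed


lemma fubini_kernel:
  fixes f g :: "real \<Rightarrow> real" and k :: "real \<Rightarrow> real \<Rightarrow> real"
  assumes f: "integrable lborel f" and g: "integrable lborel g"
    and k[measurable]: "(\<lambda>p. k (fst p) (snd p)) \<in> borel_measurable (lborel \<Otimes>\<^sub>M lborel)"
    and kb: "\<And>x y. \<bar>k x y\<bar> \<le> 1"
  shows "integrable (lborel \<Otimes>\<^sub>M lborel) (\<lambda>(x,y). f x * g y * k x y)"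
proof -
  have [measurable]: "f \<in> borel_measurable lborel" "g \<in> borel_measurable lborel" using f g by auto
  have m: "(\<lambda>p. f (fst p) * g (snd p) * k (fst p) (snd p)) \<in> borel_measurable (lborel \<Otimes>\<^sub>M lborel)"
    by measurable
  have ky[measurable]: "(\<lambda>y. k x y) \<in> borel_measurable lborel" for x
    using measurable_Pair2[OF k, of x] by simp
  have gi: "integrable lborel (\<lambda>y. \<bar>f x\<bar> * \<bar>g y\<bar>)" for x using g by auto
  have bd: "\<bar>f x * g y * k x y\<bar> \<le> \<bar>f x\<bar> * \<bar>g y\<bar>" for x y
    using kb[of x y] by (simp add: abs_mult mult_left_le)
  have i1: "integrable lborel (\<lambda>y. f x * g y * k x y)" for x
    by (rule Bochner_Integration.integrable_bound[OF gi[of x]]) (use bd in \<open>auto\<close>)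
  show ?thesis
  proof (rule lborel_pair.Fubini_integrable)
    show "(\<lambda>(x, y). f x * g y * k x y) \<in> borel_measurable (lborel \<Otimes>\<^sub>M lborel)"
      using m by (simp add: case_prod_beta')
    show "AE x in lborel. integrable lborel (\<lambda>y. case (x, y) of (x, y) \<Rightarrow> f x * g y * k x y)"
      using i1 by simp
    have "integrable lborel (\<lambda>x. \<bar>f x\<bar> * (\<integral>y. \<bar>g y\<bar> \<partial>lborel))" using f by auto
    then show "integrable lborel (\<lambda>x. \<integral>y. norm (case (x, y) of (x, y) \<Rightarrow> f x * g y * k x y) \<partial>lborel)"
    proof (rule Bochner_Integration.integrable_bound)
      show "(\<lambda>x. \<integral>y. norm (case (x, y) of (x, y) \<Rightarrow> f x * g y * k x y) \<partial>lborel) \<in> borel_measurable lborel"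
        using m by measurable
      show "AE x in lborel. norm (\<integral>y. norm (case (x, y) of (x, y) \<Rightarrow> f x * g y * k x y) \<partial>lborel)
            \<le> norm (\<bar>f x\<bar> * (\<integral>y. \<bar>g y\<bar> \<partial>lborel))"
      proof (rule AE_I2)
        fix x
        have "(\<integral>y. \<bar>f x * g y * k x y\<bar> \<partial>lborel) \<le> (\<integral>y. \<bar>f x\<bar> * \<bar>g y\<bar> \<partial>lborel)"
          by (rule integral_mono[OF _ gi]) (use i1 bd in auto)
        then show "norm (\<integral>y. norm (case (x, y) of (x, y) \<Rightarrow> f x * g y * k x y) \<partial>lborel)
            \<le> norm (\<bar>f x\<bar> * (\<integral>y. \<bar>g y\<bar> \<partial>lborel))"
          by (simp add: integral_nonneg_AE)
      qed
    qed
  qed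
qed

lemma fubini_kernel_swap:
  fixes f g :: "real \<Rightarrow> real" and k :: "real \<Rightarrow> real \<Rightarrow> real"
  assumes f: "integrable lborel f" and g: "integrable lborel g"
    and k[measurable]: "(\<lambda>p. k (fst p) (snd p)) \<in> borel_measurable (lborel \<Otimes>\<^sub>M lborel)"
    and kb: "\<And>x y. \<bar>k x y\<bar> \<le> 1"
  shows "(\<integral>x. (\<integral>y. f x * g y * k x y \<partial>lborel) \<partial>lborel) = (\<integral>y. (\<integral>x. f x * g y * k x y \<partial>lborel) \<partial>lborel)"
    and "integrable lborel (\<lambda>x. \<integral>y. f x * g y * k x y \<partial>lborel)"
    and "integrable lborel (\<lambda>y. \<integral>x. f x * g y * k x y \<partial>lborel)"
proof -
  note I = fubini_kernel[OF f g k kb]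
  show "(\<integral>x. (\<integral>y. f x * g y * k x y \<partial>lborel) \<partial>lborel) = (\<integral>y. (\<integral>x. f x * g y * k x y \<partial>lborel) \<partial>lborel)"
    using lborel_pair.Fubini_integral[of "\<lambda>x y. f x * g y * k x y"] I by simp
  show "integrable lborel (\<lambda>x. \<integral>y. f x * g y * k x y \<partial>lborel)"
    using lborel_pair.integrable_fst[of "\<lambda>x y. f x * g y * k x y"] I by simp
  show "integrable lborel (\<lambda>y. \<integral>x. f x * g y * k x y \<partial>lborel)"
    using lborel_pair.integrable_snd[of "\<lambda>x y. f x * g y * k x y"] I by simp
qed

lemma deriv_zero_out:
  assumes c: "cinf \<phi>" and z: "\<And>x. x \<le> b \<or> x \<ge> K \<Longrightarrow> \<phi> x = 0" and x: "x < b \<or> x > K"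
  shows "deriv \<phi> x = 0"
proof -
  have "(\<phi> has_real_derivative 0) (at x)"
  proof (cases "x < b")
    case True
    have "((\<lambda>_. 0) has_real_derivative 0) (at x)" by simp
    then show ?thesis
    proof (rule has_field_derivative_transform_within_open[where S="{..<b}"])
      show "x \<in> {..<b}" using True by simp
      fix y assume "y \<in> {..<b}" then show "0 = \<phi> y" using z[of y] by simp
    qed simp
  next
    case False
    then have xK: "x > K" using x by simp
    have "((\<lambda>_. 0) has_real_derivative 0) (at x)" by simp
    then show ?thesis
    proof (rule has_field_derivative_transform_within_open[where S="{K<..}"])
      show "x \<in> {K<..}" using xK by simp
      fix y assume "y \<in> {K<..}" then show "0 = \<phi> y" using z[of y] by simp
    qed simp
  qed
  then show ?thesis using DERIV_unique[OF cinf_D[OF c]] by blast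
qed

lemma cinf_deriv_cont: "cinf \<phi> \<Longrightarrow> continuous_on A (deriv \<phi>)"
  using cinf_cont[OF cinf_deriv] continuous_on_subset by blast

lemma FTC_cinf:
  assumes c: "cinf \<phi>" and yK: "y \<le> K"
  shows "(\<integral>x. indicator {y..K} x * deriv \<phi> x \<partial>lborel) = \<phi> K - \<phi> y"
proof -
  have "integral\<^sup>L lborel (\<lambda>x. indicator {y..K} x *\<^sub>R deriv \<phi> x) = \<phi> K - \<phi> y"
  proof (rule integral_FTC_atLeastAtMost[OF yK])
    fix x show "(\<phi> has_vector_derivative deriv \<phi> x) (at x within {y..K})"
      using cinf_D[OF c, of x] by (simp add: has_real_derivative_iff_has_vector_derivative has_vector_derivative_at_within)
  qed (rule cinf_deriv_cont[OF c])
  then show ?thesis by simp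
qed

lemma IBP:
  fixes w \<phi> :: "real \<Rightarrow> real"
  assumes w: "set_integrable lborel {b..K} w" and wm[measurable]: "w \<in> borel_measurable lborel"
    and c: "cinf \<phi>" and z: "\<And>x. x \<le> b \<or> x \<ge> K \<Longrightarrow> \<phi> x = 0" and bK: "b \<le> K"
  shows "integrable lborel (\<lambda>x. (\<integral>y. indicator {b..x} y * w y \<partial>lborel) * deriv \<phi> x)"
    "(\<integral>x. (\<integral>y. indicator {b..x} y * w y \<partial>lborel) * deriv \<phi> x \<partial>lborel) = - (\<integral>x. w x * \<phi> x \<partial>lborel)"
proof -
  define f where "f x = indicator {b..K} x * deriv \<phi> x" for x
  define g where "g y = indicator {b..K} y * w y" for y
  define k where "k x y = (if y \<le> x then 1 else 0::real)" for x y :: real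
  have fi: "integrable lborel f"
    using borel_integrable_atLeastAtMost'[OF cinf_deriv_cont[OF c]] unfolding set_integrable_def f_def
    by simp
  have gi: "integrable lborel g" using w unfolding set_integrable_def g_def by simp
  have km: "(\<lambda>p. k (fst p) (snd p)) \<in> borel_measurable (lborel \<Otimes>\<^sub>M lborel)"
    unfolding k_def by measurable
  have kb: "\<bar>k x y\<bar> \<le> 1" for x y by (simp add: k_def)
  note F = fubini_kernel_swap[OF fi gi km kb]
  have e1: "(\<integral>y. f x * g y * k x y \<partial>lborel) = (\<integral>y. indicator {b..x} y * w y \<partial>lborel) * deriv \<phi> x" for x
  proof (cases "x \<in> {b..K}")
    case True
    have "(\<integral>y. f x * g y * k x y \<partial>lborel) = (\<integral>y. deriv \<phi> x * (indicator {b..x} y * w y) \<partial>lborel)"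
      by (rule Bochner_Integration.integral_cong) (use True in \<open>auto simp: f_def g_def k_def split: split_indicator\<close>)
    then show ?thesis by (simp add: mult.commute)
  next
    case False
    then have "deriv \<phi> x = 0" using deriv_zero_out[OF c z] by auto
    then show ?thesis by (simp add: f_def)
  qed
  have e2: "(\<integral>x. f x * g y * k x y \<partial>lborel) = - (w y * \<phi> y)" for y
  proof (cases "y \<in> {b..K}")
    case True
    have "(\<integral>x. f x * g y * k x y \<partial>lborel) = (\<integral>x. w y * (indicator {y..K} x * deriv \<phi> x) \<partial>lborel)"
      by (rule Bochner_Integration.integral_cong) (use True in \<open>auto simp: f_def g_def k_def split: split_indicator\<close>)
    also have "\<dots> = w y * (\<phi> K - \<phi> y)" using FTC_cinf[OF c, of y K] True by simp
    also have "\<phi> K = 0" using z by simp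
    finally show ?thesis by simp
  next
    case False
    then have "\<phi> y = 0" using z by auto
    then show ?thesis using False by (simp add: g_def)
  qed
  show "integrable lborel (\<lambda>x. (\<integral>y. indicator {b..x} y * w y \<partial>lborel) * deriv \<phi> x)"
    using F(2) by (simp add: e1)
  show "(\<integral>x. (\<integral>y. indicator {b..x} y * w y \<partial>lborel) * deriv \<phi> x \<partial>lborel) = - (\<integral>x. w x * \<phi> x \<partial>lborel)"
    using F(1) by (simp add: e1 e2)
qed

lemma zero_halflines:
  fixes f :: "real \<Rightarrow> real"
  assumes fi: "integrable lborel f" and z: "\<And>x. (\<integral>y. indicator {x<..} y * f y \<partial>lborel) = 0"
  shows "AE x in lborel. f x = 0"
proof -
  have fm[measurable]: "f \<in> borel_measurable lborel" using fi by auto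
  define p where "p x = max 0 (f x)" for x
  define n where "n x = max 0 (- f x)" for x
  have pi: "integrable lborel p" "integrable lborel n" unfolding p_def n_def using fi by auto
  have pm[measurable]: "p \<in> borel_measurable borel" "n \<in> borel_measurable borel"
    unfolding p_def n_def by measurable
  have ind: "integrable lborel (\<lambda>y. indicator A y * q y)" if "integrable lborel q" "A \<in> sets borel" for A and q :: "real \<Rightarrow> real"
    using integrable_mult_indicator[OF _ that(1), of A] that(2) by simp
  have em: "emeasure (density lborel (\<lambda>x. ennreal (q x))) {x<..} = ennreal (\<integral>y. indicator {x<..} y * q y \<partial>lborel)"
    if qi: "integrable lborel q" and qn: "\<And>x. q x \<ge> 0" for q :: "real \<Rightarrow> real" and x
  proof -
    have [measurable]: "q \<in> borel_measurable lborel" using qi by auto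
    have "emeasure (density lborel (\<lambda>x. ennreal (q x))) {x<..} = (\<integral>\<^sup>+ y. ennreal (q y) * indicator {x<..} y \<partial>lborel)"
      by (rule emeasure_density) auto
    also have "\<dots> = (\<integral>\<^sup>+ y. ennreal (indicator {x<..} y * q y) \<partial>lborel)"
      by (rule nn_integral_cong) (auto split: split_indicator)
    also have "\<dots> = ennreal (\<integral>y. indicator {x<..} y * q y \<partial>lborel)"
      by (rule nn_integral_eq_integral[OF ind[OF qi]]) (auto simp: qn)
    finally show ?thesis .
  qed
  have eqI: "(\<integral>y. indicator {x<..} y * p y \<partial>lborel) = (\<integral>y. indicator {x<..} y * n y \<partial>lborel)" for x
  proof -
    have "(\<integral>y. indicator {x<..} y * p y \<partial>lborel) - (\<integral>y. indicator {x<..} y * n y \<partial>lborel)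
        = (\<integral>y. indicator {x<..} y * p y - indicator {x<..} y * n y \<partial>lborel)"
      by (rule Bochner_Integration.integral_diff[symmetric]) (auto intro: ind pi)
    also have "\<dots> = (\<integral>y. indicator {x<..} y * f y \<partial>lborel)"
      by (rule Bochner_Integration.integral_cong) (auto simp: p_def n_def split: split_indicator)
    finally show ?thesis using z[of x] by simp
  qed
  have "density lborel (\<lambda>x. ennreal (p x)) = density lborel (\<lambda>x. ennreal (n x))"
  proof (rule measure_eqI_lessThan)
    fix x
    show "emeasure (density lborel (\<lambda>x. ennreal (p x))) {x<..} < \<infinity>"
      by (subst em[OF pi(1)]) (auto simp: p_def)
    show "emeasure (density lborel (\<lambda>x. ennreal (p x))) {x<..} = emeasure (density lborel (\<lambda>x. ennreal (n x))) {x<..}"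
      by (subst em[OF pi(1)], simp add: p_def, subst em[OF pi(2)], simp add: n_def) (simp add: eqI)
  qed auto
  then have "AE x in lborel. ennreal (p x) = ennreal (n x)"
  proof (subst (asm) finite_density_unique)
    show "integral\<^sup>N lborel (\<lambda>x. ennreal (p x)) \<noteq> \<infinity>"
      using nn_integral_eq_integral[OF pi(1)] by (simp add: p_def)
  qed auto
  then show ?thesis
    by eventually_elim (auto simp: p_def n_def split: if_splits)
qed

lemma zero_on_intervals:
  fixes f :: "real \<Rightarrow> real"
  assumes fi: "\<And>K. set_integrable lborel {b..K} f" and fm[measurable]: "f \<in> borel_measurable lborel"
    and z: "\<And>a c. b \<le> a \<Longrightarrow> a \<le> c \<Longrightarrow> (\<integral>y. indicator {a<..c} y * f y \<partial>lborel) = 0"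
  shows "AE x in lborel. x > b \<longrightarrow> f x = 0"
proof -
  have "AE x in lborel. x \<in> {b<..real N} \<longrightarrow> f x = 0" for N :: nat
  proof -
    define g where "g y = indicator {b<..real N} y * f y" for y
    have gi: "integrable lborel g"
    proof -
      have "integrable lborel (\<lambda>y. indicator {b<..real N} y * (indicator {b..real N} y * f y))"
        using integrable_mult_indicator[of "{b<..real N}" lborel "\<lambda>y. indicator {b..real N} y * f y"] fi[of "real N"]
        unfolding set_integrable_def by simp
      moreover have "(\<lambda>y. indicator {b<..real N} y * (indicator {b..real N} y * f y)) = g"
        by (auto simp: g_def fun_eq_iff split: split_indicator)
      ultimately show ?thesis by simp
    qed
    have "AE x in lborel. g x = 0"
    proof (rule zero_halflines[OF gi])
      fix x
      show "(\<integral>y. indicator {x<..} y * g y \<partial>lborel) = 0"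
      proof (cases "max x b \<le> real N")
        case True
        have "(\<integral>y. indicator {x<..} y * g y \<partial>lborel) = (\<integral>y. indicator {max x b<..real N} y * f y \<partial>lborel)"
          by (rule Bochner_Integration.integral_cong) (auto simp: g_def split: split_indicator)
        also have "\<dots> = 0" using True by (intro z) auto
        finally show ?thesis .
      next
        case False
        have "(\<lambda>y. indicator {x<..} y * g y) = (\<lambda>y. 0::real)"
          using False by (auto simp: g_def fun_eq_iff split: split_indicator)
        then show ?thesis by simp
      qed
    qed
    then show ?thesis by eventually_elim (auto simp: g_def)
  qed
  then have "AE x in lborel. \<forall>N::nat. x \<in> {b<..real N} \<longrightarrow> f x = 0"
    by (subst AE_all_countable) auto
  then show ?thesis
  proof eventually_elim
    fix x assume "\<forall>N::nat. x \<in> {b<..real N} \<longrightarrow> f x = 0"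
    moreover obtain N :: nat where "x \<le> real N" using real_arch_simple by blast
    ultimately show "x > b \<longrightarrow> f x = 0" by auto
  qed
qed

lemma Bw_tendsto:
  assumes ab: "a \<le> c"
  shows "(\<lambda>n. Bw a c (1 / Suc n) x) \<longlonglongrightarrow> indicator {a<..c} x"
proof -
  have ev: "eventually (\<lambda>n. 1 / real (Suc n) \<le> e) sequentially" if e0: "e > 0" for e :: real
  proof -
    obtain N :: nat where N: "1 / real (Suc N) < e" using nat_approx_posE[OF e0] by blast
    show ?thesis unfolding eventually_sequentially
    proof (intro exI allI impI)
      fix n assume "N \<le> n"
      then have "1 / real (Suc n) \<le> 1 / real (Suc N)" by (simp add: frac_le)
      then show "1 / real (Suc n) \<le> e" using N by simp
    qed
  qed
  show ?thesis
  proof (rule tendsto_eventually)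
    show "eventually (\<lambda>n. Bw a c (1 / Suc n) x = indicator {a<..c} x) sequentially"
    proof (cases "x \<le> a")
      case True then show ?thesis using Bw_lim[of "1 / Suc _" a c x] ab by (auto intro: always_eventually)
    next
      case False
      show ?thesis
      proof (cases "x > c")
        case True
        have "0 < x - c" using True by simp
        show ?thesis using ev[OF \<open>0 < x - c\<close>]
        proof (elim eventually_mono)
          fix n assume "1 / real (Suc n) \<le> x - c"
          then show "Bw a c (1 / Suc n) x = indicator {a<..c} x"
            using Bw_lim[of "1 / Suc n" a c x] ab True by auto
        qed
      next
        case xc: False
        have "0 < x - a" using False by simp
        show ?thesis using ev[OF \<open>0 < x - a\<close>]
        proof (elim eventually_mono)
          fix n assume d: "1 / real (Suc n) \<le> x - a"
          have "(x - a) / (1 / real (Suc n)) \<ge> 1" using d False by (simp add: field_simps)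
          moreover have "(x - c) / (1 / real (Suc n)) \<le> 0" using xc by (intro divide_nonpos_pos) auto
          ultimately show "Bw a c (1 / Suc n) x = indicator {a<..c} x"
            unfolding Bw_def using Sst_one Sst_zero False xc by (auto simp: indicator_def)
        qed
      qed
    qed
  qed
qed

lemma Psi_bound: "\<bar>Psi a c a' c' d x\<bar> \<le> \<bar>c' - a'\<bar> + \<bar>c - a\<bar>"
proof -
  have "\<bar>Psi a c a' c' d x\<bar> \<le> \<bar>c' - a'\<bar> * \<bar>Bw a c d x\<bar> + \<bar>c - a\<bar> * \<bar>Bw a' c' d x\<bar>"
    unfolding Psi_def by (metis abs_mult abs_triangle_ineq4)
  also have "\<dots> \<le> \<bar>c' - a'\<bar> * 1 + \<bar>c - a\<bar> * 1"
    by (intro add_mono mult_left_mono Bw_bound) auto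
  finally show ?thesis by simp
qed

lemma Psi_zero: "d > 0 \<Longrightarrow> a \<le> c \<Longrightarrow> a' \<le> c' \<Longrightarrow> x \<le> min a a' \<or> x \<ge> max c c' + d \<Longrightarrow> Psi a c a' c' d x = 0"
proof -
  assume h: "d > 0" "a \<le> c" "a' \<le> c'" "x \<le> min a a' \<or> x \<ge> max c c' + d"
  then have "(x \<le> a \<or> x \<ge> c + d) \<and> (x \<le> a' \<or> x \<ge> c' + d)" by (auto simp: min_def max_def split: if_splits)
  then show ?thesis unfolding Psi_def using Bw_lim[of d a c x] Bw_lim[of d a' c' x] h by auto
qed

lemma W_meas:
  fixes w :: "real \<Rightarrow> real"
  assumes [measurable]: "w \<in> borel_measurable lborel"
  shows "(\<lambda>x. \<integral>y. indicator {b..x} y * w y \<partial>lborel) \<in> borel_measurable lborel"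
proof -
  have "(\<lambda>p. indicator {b..fst p} (snd p) * w (snd p)) \<in> borel_measurable (lborel \<Otimes>\<^sub>M lborel)"
  proof -
    have "(\<lambda>p. indicator {b..fst p} (snd p) * w (snd p)) = (\<lambda>p. (if b \<le> snd p \<and> snd p \<le> fst p then 1 else 0) * w (snd p))"
      by (auto simp: fun_eq_iff split: split_indicator)
    moreover have "(\<lambda>p::real\<times>real. (if b \<le> snd p \<and> snd p \<le> fst p then 1 else 0) * w (snd p)) \<in> borel_measurable (lborel \<Otimes>\<^sub>M lborel)"
      by measurable
    ultimately show ?thesis by simp
  qed
  then show ?thesis using lborel.borel_measurable_lebesgue_integral[of "\<lambda>x y. indicator {b..x} y * w y" lborel]
    by (simp add: case_prod_beta')
qed

lemma W_bound:
  fixes w :: "real \<Rightarrow> real"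
  assumes wi: "set_integrable lborel {b..K} w" and x: "x \<le> K"
  shows "\<bar>\<integral>y. indicator {b..x} y * w y \<partial>lborel\<bar> \<le> (\<integral>y. indicator {b..K} y * \<bar>w y\<bar> \<partial>lborel)"
proof -
  have wi': "integrable lborel (\<lambda>y. indicator {b..K} y * w y)" using wi unfolding set_integrable_def by simp
  have "\<bar>\<integral>y. indicator {b..x} y * w y \<partial>lborel\<bar> \<le> (\<integral>y. \<bar>indicator {b..x} y * w y\<bar> \<partial>lborel)"
    by (rule integral_abs_bound)
  also have "\<dots> \<le> (\<integral>y. indicator {b..K} y * \<bar>w y\<bar> \<partial>lborel)"
  proof (rule integral_mono)
    show "integrable lborel (\<lambda>y. indicator {b..K} y * \<bar>w y\<bar>)" using integrable_abs[OF wi'] by (simp add: abs_mult)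
    have "integrable lborel (\<lambda>y. indicator {b..x} y * (indicator {b..K} y * w y))"
      using integrable_mult_indicator[OF _ wi', of "{b..x}"] by simp
    moreover have "(\<lambda>y. indicator {b..x} y * (indicator {b..K} y * w y)) = (\<lambda>y. indicator {b..x} y * w y)"
      using x by (auto simp: fun_eq_iff split: split_indicator)
    ultimately show "integrable lborel (\<lambda>y. \<bar>indicator {b..x} y * w y\<bar>)" by simp
  qed (use x in \<open>auto split: split_indicator\<close>)
  finally show ?thesis .
qed

lemma cont_meas: "continuous_on UNIV (f::real\<Rightarrow>real) \<Longrightarrow> f \<in> borel_measurable lborel"
  by (simp add: borel_measurable_continuous_onI)

lemma Phi_zero:
  assumes "d > 0" "a \<le> c" "a' \<le> c'" and x: "x \<le> min a a' \<or> x \<ge> max c c' + d"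
  shows "Phi a c a' c' d x = 0"
proof (cases "x \<le> min a a'")
  case True then show ?thesis
    using assms Aw_left[of d a c x] Aw_left[of d a' c' x] unfolding Phi_def by auto
next
  case False
  have e1: "Aw a c d x = c - a" "Aw a' c' d x = c' - a'"
    using False x assms Aw_right[of d a c x] Aw_right[of d a' c' x] by auto
  show ?thesis unfolding Phi_def e1 by (simp add: algebra_simps)
qed

lemma loc_int_bdd:
  fixes v p :: "real \<Rightarrow> real"
  assumes vi: "set_integrable lborel {b..K} v" and pm: "p \<in> borel_measurable lborel"
    and vm: "v \<in> borel_measurable lborel"
    and pb: "\<And>x. \<bar>p x\<bar> \<le> C" and pz: "\<And>x. x < b \<or> x > K \<Longrightarrow> p x = 0"
  shows "integrable lborel (\<lambda>x. v x * p x)"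
proof -
  have vi': "integrable lborel (\<lambda>x. indicator {b..K} x * v x)" using vi unfolding set_integrable_def by simp
  have "integrable lborel (\<lambda>x. C * \<bar>indicator {b..K} x * v x\<bar>)" using vi' by auto
  then show ?thesis
  proof (rule Bochner_Integration.integrable_bound)
    show "(\<lambda>x. v x * p x) \<in> borel_measurable lborel" using pm vm by measurable
    show "AE x in lborel. norm (v x * p x) \<le> norm (C * \<bar>indicator {b..K} x * v x\<bar>)"
    proof (rule AE_I2)
      fix x
      show "norm (v x * p x) \<le> norm (C * \<bar>indicator {b..K} x * v x\<bar>)"
      proof (cases "x \<in> {b..K}")
        case True
        have "\<bar>v x * p x\<bar> \<le> \<bar>v x\<bar> * C" using pb[of x] by (simp add: abs_mult mult_left_mono)
        moreover have "C \<ge> 0" using pb[of x] by simp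
        ultimately show ?thesis using True by (simp add: abs_mult mult.commute)
      next
        case False
        then have "x < b \<or> x > K" by auto
        then show ?thesis using pz[of x] by simp
      qed
    qed
  qed
qed

lemma stepA:
  fixes v w :: "real \<Rightarrow> real"
  assumes vm[measurable]: "v \<in> borel_measurable lborel" and vi: "\<And>K. compact K \<Longrightarrow> set_integrable lborel K v"
    and wm[measurable]: "w \<in> borel_measurable lborel" and wi: "\<And>K. compact K \<Longrightarrow> set_integrable lborel K w"
    and weak: "\<And>\<phi>. test_fun \<phi> \<Longrightarrow> (LINT x|lborel. v x * deriv \<phi> x) = - (LINT x|lborel. w x * \<phi> x)"
  shows "\<exists>c. AE x in lborel. x > b \<longrightarrow> v x = c + (\<integral>y. indicator {b..x} y * w y \<partial>lborel)"
proof -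
  define W where "W x = (\<integral>y. indicator {b..x} y * w y \<partial>lborel)" for x
  define h where "h x = v x - W x" for x
  have Wm[measurable]: "W \<in> borel_measurable lborel" unfolding W_def by (rule W_meas[OF wm])
  have hm[measurable]: "h \<in> borel_measurable lborel" unfolding h_def by measurable
  have viK: "set_integrable lborel {b..K} v" for K by (rule vi) simp
  have wiK: "set_integrable lborel {b..K} w" for K by (rule wi) simp
  have hiK: "integrable lborel (\<lambda>x. indicator {b..K} x * h x)" for K
  proof -
    have "integrable lborel (\<lambda>x. W x * indicator {b..K} x)"
    proof (rule loc_int_bdd[where b=b and K=K and C=1])
      show "set_integrable lborel {b..K} W"
        unfolding set_integrable_def
      proof (rule Bochner_Integration.integrable_bound)
        show "integrable lborel (\<lambda>x. indicator {b..K} x * (\<integral>y. indicator {b..K} y * \<bar>w y\<bar> \<partial>lborel))"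
          by (intro integrable_mult_left integrable_real_indicator) (auto simp: emeasure_lborel_Icc_eq)
        show "AE x in lborel. norm (indicator {b..K} x *\<^sub>R W x) \<le> norm (indicator {b..K} x * (\<integral>y. indicator {b..K} y * \<bar>w y\<bar> \<partial>lborel))"
          using W_bound[OF wiK] by (auto simp: W_def split: split_indicator intro!: AE_I2)
      qed measurable
    qed (auto split: split_indicator)
    then have "integrable lborel (\<lambda>x. indicator {b..K} x * v x - indicator {b..K} x * W x)"
      using viK[of K] unfolding set_integrable_def by (auto simp: mult.commute)
    then show ?thesis by (simp add: h_def right_diff_distrib)
  qed
  have step1: "(\<integral>x. h x * Psi a c a' c' d x \<partial>lborel) = 0"
    if h1: "b \<le> a" "a \<le> c" "b \<le> a'" "a' \<le> c'" "d > 0" for a c a' c' d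
  proof -
    define K where "K = max c c' + d"
    have bK: "b \<le> K" using h1 by (auto simp: K_def max_def)
    have z: "Phi a c a' c' d x = 0" if "x \<le> b \<or> x \<ge> K" for x
    proof -
      have "x \<le> min a a' \<or> x \<ge> max c c' + d" using that h1 by (auto simp: K_def)
      then show ?thesis by (rule Phi_zero[OF h1(5) h1(2) h1(4)])
    qed
    have tP: "test_fun (Phi a c a' c' d)" by (rule test_Phi[OF h1(5) h1(2) h1(4)])
    then have cP: "cinf (Phi a c a' c' d)" unfolding test_fun_iff by simp
    note I = IBP[OF wiK wm cP z bK]
    have dP: "deriv (Phi a c a' c' d) = Psi a c a' c' d" by (rule deriv_Phi[OF h1(5)])
    have e1: "(\<integral>x. v x * Psi a c a' c' d x \<partial>lborel) = - (\<integral>x. w x * Phi a c a' c' d x \<partial>lborel)"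
      using weak[OF tP] unfolding dP .
    have Psim: "Psi a c a' c' d \<in> borel_measurable lborel"
      using cinf_cont[OF cinf_deriv[OF cP]] dP cont_meas by metis
    have vP: "integrable lborel (\<lambda>x. v x * Psi a c a' c' d x)"
    proof (rule loc_int_bdd[OF viK Psim vm Psi_bound])
      fix x assume "x < b \<or> x > K"
      then have "x \<le> min a a' \<or> x \<ge> max c c' + d" using h1 by (auto simp: K_def)
      then show "Psi a c a' c' d x = 0" by (rule Psi_zero[OF h1(5) h1(2) h1(4)])
    qed
    have "(\<integral>x. h x * Psi a c a' c' d x \<partial>lborel) = (\<integral>x. v x * Psi a c a' c' d x - W x * Psi a c a' c' d x \<partial>lborel)"
      by (simp add: h_def left_diff_distrib)
    also have "\<dots> = (\<integral>x. v x * Psi a c a' c' d x \<partial>lborel) - (\<integral>x. W x * Psi a c a' c' d x \<partial>lborel)"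
      by (rule Bochner_Integration.integral_diff[OF vP]) (use I(1) dP in \<open>simp add: W_def\<close>)
    also have "\<dots> = 0" using e1 I(2) dP by (simp add: W_def)
    finally show ?thesis .
  qed
  have step2: "(\<integral>x. h x * ((c' - a') * indicator {a<..c} x - (c - a) * indicator {a'<..c'} x) \<partial>lborel) = 0"
    if h1: "b \<le> a" "a \<le> c" "b \<le> a'" "a' \<le> c'" for a c a' c'
  proof -
    define K where "K = max c c' + 1"
    define C where "C = \<bar>c' - a'\<bar> + \<bar>c - a\<bar>"
    let ?s = "\<lambda>n x. h x * Psi a c a' c' (1 / Suc n) x"
    let ?f = "\<lambda>x. h x * ((c' - a') * indicator {a<..c} x - (c - a) * indicator {a'<..c'} x)"
    have lim: "(\<lambda>n. integral\<^sup>L lborel (?s n)) \<longlonglongrightarrow> integral\<^sup>L lborel ?f"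
    proof (rule integral_dominated_convergence[where w="\<lambda>x. C * \<bar>indicator {b..K} x * h x\<bar>"])
      show "?f \<in> borel_measurable lborel" by measurable
      show "?s n \<in> borel_measurable lborel" for n
      proof -
        have d0: "(0::real) < 1 / Suc n" by simp
        have "test_fun (Phi a c a' c' (1 / Suc n))" by (rule test_Phi[OF d0 h1(2) h1(4)])
        then have cP: "cinf (Phi a c a' c' (1 / Suc n))" unfolding test_fun_iff by simp
        have "cinf (Psi a c a' c' (1 / Suc n))"
          using cinf_deriv[OF cP] unfolding deriv_Phi[OF d0] .
        then have "Psi a c a' c' (1 / Suc n) \<in> borel_measurable lborel"
          using cinf_cont cont_meas by metis
        then show ?thesis by measurable
      qed
      show "integrable lborel (\<lambda>x. C * \<bar>indicator {b..K} x * h x\<bar>)" using hiK[of K] by auto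
      show "AE x in lborel. (\<lambda>n. ?s n x) \<longlonglongrightarrow> ?f x"
      proof (rule AE_I2)
        fix x
        have "(\<lambda>n. Psi a c a' c' (1 / Suc n) x) \<longlonglongrightarrow> (c' - a') * indicator {a<..c} x - (c - a) * indicator {a'<..c'} x"
          unfolding Psi_def by (intro tendsto_intros Bw_tendsto h1(2,4))
        then show "(\<lambda>n. ?s n x) \<longlonglongrightarrow> ?f x" by (intro tendsto_intros)
      qed
      show "AE x in lborel. norm (?s n x) \<le> C * \<bar>indicator {b..K} x * h x\<bar>" for n
      proof (rule AE_I2)
        fix x
        show "norm (?s n x) \<le> C * \<bar>indicator {b..K} x * h x\<bar>"
        proof (cases "x \<in> {b..K}")
          case True
          then show ?thesis using Psi_bound[of a c a' c' "1 / Suc n" x]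
            by (simp add: C_def abs_mult mult.commute mult_left_mono)
        next
          case False
          have le1: "1 / real (Suc n) \<le> 1" by simp
          have "x < b \<or> x > K" using False by auto
          then have "x \<le> min a a' \<or> x \<ge> max c c' + 1 / Suc n"
          proof
            assume "x > K" then show ?thesis using le1 unfolding K_def by linarith
          qed (use h1 in auto)
          moreover have d0': "(0::real) < 1 / Suc n" by simp
          ultimately have "Psi a c a' c' (1 / Suc n) x = 0" using Psi_zero[OF d0' h1(2) h1(4)] by blast
          then show ?thesis by (simp add: C_def)
        qed
      qed
    qed
    moreover have "(\<lambda>n. integral\<^sup>L lborel (?s n)) = (\<lambda>n. 0)" using step1[OF h1] by simp
    ultimately have "(\<lambda>n. 0::real) \<longlonglongrightarrow> integral\<^sup>L lborel ?f" by simp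
    then show ?thesis by (simp add: LIMSEQ_const_iff)
  qed
  have hI: "integrable lborel (\<lambda>x. indicator {a<..c} x * h x)" if "b \<le> a" for a c
  proof -
    have "integrable lborel (\<lambda>x. indicator {a<..c} x * (indicator {b..c} x * h x))"
      using integrable_mult_indicator[OF _ hiK[of c], of "{a<..c}"] by simp
    moreover have "(\<lambda>x. indicator {a<..c} x * (indicator {b..c} x * h x)) = (\<lambda>x. indicator {a<..c} x * h x)"
      using that by (auto simp: fun_eq_iff split: split_indicator)
    ultimately show ?thesis by simp
  qed
  define c0 where "c0 = (\<integral>x. indicator {b<..b+1} x * h x \<partial>lborel)"
  have step3: "(\<integral>x. indicator {a<..c} x * (h x - c0) \<partial>lborel) = 0" if h1: "b \<le> a" "a \<le> c" for a c
  proof -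
    have ci: "integrable lborel (\<lambda>x. indicator {a<..c} x * c0)"
      by (intro integrable_mult_left integrable_real_indicator) (use h1 in \<open>auto simp: emeasure_lborel_Ioc\<close>)
    have i2: "integrable lborel (\<lambda>x. (c - a) * (indicator {b<..b+1} x * h x))"
      using hI[of b "b+1"] by (intro integrable_mult_right) simp
    have "0 = (\<integral>x. h x * ((b + 1 - b) * indicator {a<..c} x - (c - a) * indicator {b<..b+1} x) \<partial>lborel)"
      using step2[of a c b "b+1"] h1 by simp
    also have "\<dots> = (\<integral>x. indicator {a<..c} x * h x - (c - a) * (indicator {b<..b+1} x * h x) \<partial>lborel)"
      by (rule Bochner_Integration.integral_cong) (simp_all add: algebra_simps)
    also have "\<dots> = (\<integral>x. indicator {a<..c} x * h x \<partial>lborel) - (\<integral>x. (c - a) * (indicator {b<..b+1} x * h x) \<partial>lborel)"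
      by (rule Bochner_Integration.integral_diff[OF hI[OF h1(1)] i2])
    also have "(\<integral>x. (c - a) * (indicator {b<..b+1} x * h x) \<partial>lborel) = (c - a) * c0"
      unfolding c0_def by (rule integral_mult_right_zero)
    finally have A: "(\<integral>x. indicator {a<..c} x * h x \<partial>lborel) = (c - a) * c0" by linarith
    have "(\<integral>x. indicator {a<..c} x * c0 \<partial>lborel) = (\<integral>x. indicator {a<..c} x \<partial>lborel) * c0"
      by (rule integral_mult_left_zero)
    also have "(\<integral>x. indicator {a<..c} x \<partial>lborel) = measure lborel {a<..c}"
      using Bochner_Integration.integral_indicator[of lborel "{a<..c}"] by simp
    also have "measure lborel {a<..c} = c - a" using h1 by (simp add: measure_lborel_Ioc)
    finally have B: "(\<integral>x. indicator {a<..c} x * c0 \<partial>lborel) = (c - a) * c0" .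
    have "(\<integral>x. indicator {a<..c} x * (h x - c0) \<partial>lborel) = (\<integral>x. indicator {a<..c} x * h x - indicator {a<..c} x * c0 \<partial>lborel)"
      by (rule Bochner_Integration.integral_cong) (simp_all add: algebra_simps)
    also have "\<dots> = (\<integral>x. indicator {a<..c} x * h x \<partial>lborel) - (\<integral>x. indicator {a<..c} x * c0 \<partial>lborel)"
      by (rule Bochner_Integration.integral_diff[OF hI[OF h1(1)] ci])
    finally show ?thesis using A B by linarith
  qed
  have "AE x in lborel. x > b \<longrightarrow> h x - c0 = 0"
  proof (rule zero_on_intervals)
    show "set_integrable lborel {b..K} (\<lambda>x. h x - c0)" for K
    proof -
      have "integrable lborel (\<lambda>x. indicator {b..K} x * c0)"
        by (intro integrable_mult_left integrable_real_indicator) (auto simp: emeasure_lborel_Icc_eq)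
      then have "integrable lborel (\<lambda>x. indicator {b..K} x * h x - indicator {b..K} x * c0)"
        using hiK[of K] by auto
      then show ?thesis unfolding set_integrable_def by (simp add: right_diff_distrib)
    qed
    show "(\<lambda>x. h x - c0) \<in> borel_measurable lborel" by measurable
    show "\<And>a c. b \<le> a \<Longrightarrow> a \<le> c \<Longrightarrow> (\<integral>y. indicator {a<..c} y * (h y - c0) \<partial>lborel) = 0"
      by (rule step3)
  qed
  then have "AE x in lborel. x > b \<longrightarrow> v x = c0 + W x"
    by (rule eventually_mono) (auto simp: h_def)
  then have "AE x in lborel. x > b \<longrightarrow> v x = c0 + (\<integral>y. indicator {b..x} y * w y \<partial>lborel)"
    by (simp add: W_def)
  then show ?thesis by (rule exI)
qed


lemma shift_integrable:
  fixes K :: "real \<Rightarrow> real"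
  assumes "integrable lborel K"
  shows "integrable lborel (\<lambda>u. K (u - y))"
proof -
  have "integrable lborel (\<lambda>u. K (- y + 1 * u))" by (rule lborel_integrable_real_affine[OF assms]) simp
  moreover have "(\<lambda>u. K (- y + 1 * u)) = (\<lambda>u. K (u - y))" by (simp add: algebra_simps)
  ultimately show ?thesis by simp
qed

lemma shift_integral:
  fixes K :: "real \<Rightarrow> real"
  shows "(\<integral>u. K (u - y) \<partial>lborel) = (\<integral>u. K u \<partial>lborel)"
proof -
  have "(\<integral>u. K u \<partial>lborel) = \<bar>1\<bar> *\<^sub>R (\<integral>u. K (- y + 1 * u) \<partial>lborel)"
    by (rule lborel_integral_real_affine) simp
  moreover have "(\<lambda>u. K (- y + 1 * u)) = (\<lambda>u. K (u - y))" by (simp add: algebra_simps)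
  ultimately show ?thesis by simp
qed

lemma conv_fubini:
  fixes K \<rho> \<psi> :: "real \<Rightarrow> real"
  assumes Ki: "integrable lborel K" and ri: "integrable lborel \<rho>"
    and pm[measurable]: "\<psi> \<in> borel_measurable lborel" and pb: "\<And>u. \<bar>\<psi> u\<bar> \<le> 1"
  shows "integrable lborel (\<lambda>u. \<psi> u * (\<integral>y. K (u - y) * \<rho> y \<partial>lborel))"
    "(\<integral>u. \<psi> u * (\<integral>y. K (u - y) * \<rho> y \<partial>lborel) \<partial>lborel) = (\<integral>y. \<rho> y * (\<integral>u. \<psi> u * K (u - y) \<partial>lborel) \<partial>lborel)"
proof -
  have Km[measurable]: "K \<in> borel_measurable borel" using Ki by auto
  have rm[measurable]: "\<rho> \<in> borel_measurable borel" using ri by auto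
  define f where "f y u = \<rho> y * (\<psi> u * K (u - y))" for y u
  have fm: "(\<lambda>p. f (fst p) (snd p)) \<in> borel_measurable (lborel \<Otimes>\<^sub>M lborel)"
    unfolding f_def by measurable
  have Kt: "integrable lborel (\<lambda>u. K (u - y))" for y by (rule shift_integrable[OF Ki])
  have bd: "\<bar>\<psi> u * K (u - y)\<bar> \<le> \<bar>K (u - y)\<bar>" for u y
    using pb[of u] by (simp add: abs_mult mult_left_le_one_le)
  have ii: "integrable lborel (\<lambda>u. \<psi> u * K (u - y))" for y
    by (rule Bochner_Integration.integrable_bound[OF integrable_abs[OF Kt[of y]]]) (use bd in auto)
  have int: "integrable (lborel \<Otimes>\<^sub>M lborel) (\<lambda>(y, u). f y u)"
  proof (rule lborel_pair.Fubini_integrable)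
    show "(\<lambda>(y, u). f y u) \<in> borel_measurable (lborel \<Otimes>\<^sub>M lborel)" using fm by (simp add: case_prod_beta')
    show "AE y in lborel. integrable lborel (\<lambda>u. case (y, u) of (y, u) \<Rightarrow> f y u)"
      using ii by (simp add: f_def)
    have "integrable lborel (\<lambda>y. \<bar>\<rho> y\<bar> * (\<integral>u. \<bar>K u\<bar> \<partial>lborel))" using ri by auto
    then show "integrable lborel (\<lambda>y. \<integral>u. norm (case (y, u) of (y, u) \<Rightarrow> f y u) \<partial>lborel)"
    proof (rule Bochner_Integration.integrable_bound)
      show "(\<lambda>y. \<integral>u. norm (case (y, u) of (y, u) \<Rightarrow> f y u) \<partial>lborel) \<in> borel_measurable lborel"
        using fm by measurable
      show "AE y in lborel. norm (\<integral>u. norm (case (y, u) of (y, u) \<Rightarrow> f y u) \<partial>lborel) \<le> norm (\<bar>\<rho> y\<bar> * (\<integral>u. \<bar>K u\<bar> \<partial>lborel))"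
      proof (rule AE_I2)
        fix y
        have "(\<integral>u. \<bar>f y u\<bar> \<partial>lborel) = \<bar>\<rho> y\<bar> * (\<integral>u. \<bar>\<psi> u * K (u - y)\<bar> \<partial>lborel)"
          by (simp add: f_def abs_mult)
        also have "(\<integral>u. \<bar>\<psi> u * K (u - y)\<bar> \<partial>lborel) \<le> (\<integral>u. \<bar>K (u - y)\<bar> \<partial>lborel)"
          by (rule integral_mono) (use ii Kt bd in auto)
        also have "(\<integral>u. \<bar>K (u - y)\<bar> \<partial>lborel) = (\<integral>u. \<bar>K u\<bar> \<partial>lborel)"
          by (rule shift_integral)
        finally have "(\<integral>u. \<bar>f y u\<bar> \<partial>lborel) \<le> \<bar>\<rho> y\<bar> * (\<integral>u. \<bar>K u\<bar> \<partial>lborel)"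
          by (simp add: mult_left_mono)
        then show "norm (\<integral>u. norm (case (y, u) of (y, u) \<Rightarrow> f y u) \<partial>lborel) \<le> norm (\<bar>\<rho> y\<bar> * (\<integral>u. \<bar>K u\<bar> \<partial>lborel))"
          by (simp add: integral_nonneg_AE)
      qed
    qed
  qed
  have e1: "(\<integral>y. f y u \<partial>lborel) = \<psi> u * (\<integral>y. K (u - y) * \<rho> y \<partial>lborel)" for u
  proof -
    have "(\<integral>y. f y u \<partial>lborel) = (\<integral>y. \<psi> u * (K (u - y) * \<rho> y) \<partial>lborel)"
      by (rule Bochner_Integration.integral_cong) (simp_all add: f_def algebra_simps)
    then show ?thesis by simp
  qed
  have e2: "(\<integral>u. f y u \<partial>lborel) = \<rho> y * (\<integral>u. \<psi> u * K (u - y) \<partial>lborel)" for y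
    by (simp add: f_def)
  show "integrable lborel (\<lambda>u. \<psi> u * (\<integral>y. K (u - y) * \<rho> y \<partial>lborel))"
    using lborel_pair.integrable_snd[OF int] by (simp add: e1)
  show "(\<integral>u. \<psi> u * (\<integral>y. K (u - y) * \<rho> y \<partial>lborel) \<partial>lborel) = (\<integral>y. \<rho> y * (\<integral>u. \<psi> u * K (u - y) \<partial>lborel) \<partial>lborel)"
    using lborel_pair.Fubini_integral[OF int] by (simp add: e1 e2)
qed

lemma stepB:
  fixes G G' \<rho> :: "real \<Rightarrow> real"
  assumes Gd: "\<And>x. (G has_real_derivative G' x) (at x)" and G'c: "continuous_on UNIV G'"
    and G'i: "integrable lborel G'" and Gb: "\<And>x. \<bar>G x\<bar> \<le> B" and ri: "integrable lborel \<rho>"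
    and sx: "s \<le> x"
  shows "integrable lborel (\<lambda>u. indicator {s..x} u * conv G' \<rho> u)"
    "conv G \<rho> x - conv G \<rho> s = (\<integral>u. indicator {s..x} u * conv G' \<rho> u \<partial>lborel)"
proof -
  have Gc: "continuous_on UNIV G" by (meson DERIV_isCont Gd continuous_at_imp_continuous_on)
  have Gm[measurable]: "G \<in> borel_measurable borel" using Gc by (simp add: borel_measurable_continuous_onI)
  have rm[measurable]: "\<rho> \<in> borel_measurable borel" using ri by auto
  have pm: "indicator {s..x} \<in> borel_measurable lborel" by simp
  have pb: "\<bar>indicator {s..x} u\<bar> \<le> (1::real)" for u by (simp split: split_indicator)
  note CF = conv_fubini[OF G'i ri pm pb]
  show "integrable lborel (\<lambda>u. indicator {s..x} u * conv G' \<rho> u)"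
    using CF(1) by (simp add: conv_def)
  have Gint: "integrable lborel (\<lambda>y. G (z - y) * \<rho> y)" for z
  proof -
    have "integrable lborel (\<lambda>y. B * \<bar>\<rho> y\<bar>)" using ri by auto
    then show ?thesis
    proof (rule Bochner_Integration.integrable_bound)
      show "AE y in lborel. norm (G (z - y) * \<rho> y) \<le> norm (B * \<bar>\<rho> y\<bar>)"
      proof (rule AE_I2)
        fix y
        have "\<bar>G (z - y)\<bar> * \<bar>\<rho> y\<bar> \<le> \<bar>B\<bar> * \<bar>\<rho> y\<bar>"
          using Gb[of "z - y"] by (intro mult_right_mono) auto
        then show "norm (G (z - y) * \<rho> y) \<le> norm (B * \<bar>\<rho> y\<bar>)" by (simp add: abs_mult)
      qed
    qed simp
  qed
  have ftc: "G (x - y) - G (s - y) = (\<integral>u. indicator {s..x} u * G' (u - y) \<partial>lborel)" for y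
  proof -
    have "integral\<^sup>L lborel (\<lambda>u. indicator {s..x} u *\<^sub>R G' (u - y)) = G (x - y) - G (s - y)"
    proof (rule integral_FTC_atLeastAtMost[OF sx])
      fix u
      have "((\<lambda>u. G (u - y)) has_real_derivative G' (u - y) * 1) (at u)"
        by (rule DERIV_chain2[OF Gd]) (auto intro!: derivative_eq_intros)
      then show "((\<lambda>u. G (u - y)) has_vector_derivative G' (u - y)) (at u within {s..x})"
        by (simp add: has_real_derivative_iff_has_vector_derivative has_vector_derivative_at_within)
      show "continuous_on {s..x} (\<lambda>u. G' (u - y))"
        by (intro continuous_on_compose2[OF G'c]) (auto intro!: continuous_intros)
    qed
    then show ?thesis by simp
  qed
  have "conv G \<rho> x - conv G \<rho> s = (\<integral>y. G (x - y) * \<rho> y - G (s - y) * \<rho> y \<partial>lborel)"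
    unfolding conv_def by (rule Bochner_Integration.integral_diff[symmetric, OF Gint Gint])
  also have "\<dots> = (\<integral>y. \<rho> y * (\<integral>u. indicator {s..x} u * G' (u - y) \<partial>lborel) \<partial>lborel)"
  proof (rule Bochner_Integration.integral_cong)
    fix y
    show "G (x - y) * \<rho> y - G (s - y) * \<rho> y = \<rho> y * (\<integral>u. indicator {s..x} u * G' (u - y) \<partial>lborel)"
      unfolding ftc[of y, symmetric] by (simp add: algebra_simps)
  qed simp
  also have "\<dots> = (\<integral>u. indicator {s..x} u * conv G' \<rho> u \<partial>lborel)"
    using CF(2) by (simp add: conv_def)
  finally show "conv G \<rho> x - conv G \<rho> s = (\<integral>u. indicator {s..x} u * conv G' \<rho> u \<partial>lborel)" .
qed


lemma sub_ind:
  fixes r :: "real \<Rightarrow> real"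
  assumes ri: "integrable lborel (\<lambda>x. indicator B x * r x)" and AB: "A \<subseteq> B" and Am: "A \<in> sets borel"
  shows "integrable lborel (\<lambda>x. indicator A x * r x)"
proof -
  have "integrable lborel (\<lambda>x. indicator A x * (indicator B x * r x))"
    using integrable_mult_indicator[OF _ ri, of A] Am by simp
  moreover have "(\<lambda>x. indicator A x * (indicator B x * r x)) = (\<lambda>x. indicator A x * r x)"
    using AB by (auto simp: fun_eq_iff split: split_indicator)
  ultimately show ?thesis by simp
qed

lemma Icc_Ioc_int:
  fixes r :: "real \<Rightarrow> real"
  assumes [measurable]: "r \<in> borel_measurable borel"
  shows "(\<integral>x. indicator {y..t} x * r x \<partial>lborel) = (\<integral>x. indicator {y<..t} x * r x \<partial>lborel)"
  by (rule integral_cong_AE) (auto intro!: eventually_mono[OF AE_lborel_singleton[of y]] split: split_indicator)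

lemma chain_rule:
  fixes r :: "real \<Rightarrow> real" and R0 :: real
  assumes ri: "integrable lborel (\<lambda>x. indicator {s..t} x * r x)" and st: "s \<le> t"
    and rm: "r \<in> borel_measurable borel"
  defines "R \<equiv> \<lambda>x. R0 + (\<integral>y. indicator {s..x} y * r y \<partial>lborel)"
  shows "integrable lborel (\<lambda>x. indicator {s..t} x * (R x * r x))"
    "(\<integral>x. indicator {s..t} x * (R x * r x) \<partial>lborel) = ((R t)\<^sup>2 - R0\<^sup>2) / 2"
proof -
  define r' where "r' x = indicator {s..t} x * r x" for x
  define k where "k x y = (if y \<le> x then 1 else 0::real)" for x y :: real
  have r'_eq: "r' = (\<lambda>x. indicator {s..t} x * r x)" by (rule ext) (simp add: r'_def)
  have r'i: "integrable lborel r'" using ri by (simp add: r'_eq)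
  have km: "(\<lambda>p. k (fst p) (snd p)) \<in> borel_measurable (lborel \<Otimes>\<^sub>M lborel)"
    unfolding k_def by measurable
  have kb: "\<bar>k x y\<bar> \<le> 1" for x y by (simp add: k_def)
  note F = fubini_kernel_swap[OF r'i r'i km kb]
  define D where "D = (\<integral>y. r' y \<partial>lborel)"
  have RD: "R t = R0 + D" by (simp add: R_def D_def r'_def)
  have A: "(\<integral>y. r' x * r' y * k x y \<partial>lborel) = r' x * (R x - R0)" for x
  proof (cases "x \<in> {s..t}")
    case True
    have "(\<integral>y. r' x * r' y * k x y \<partial>lborel) = (\<integral>y. r' x * (indicator {s..x} y * r y) \<partial>lborel)"
      by (rule Bochner_Integration.integral_cong) (use True in \<open>auto simp: r'_def k_def split: split_indicator\<close>)
    then show ?thesis by (simp add: R_def)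
  next
    case False then show ?thesis by (simp add: r'_def)
  qed
  have B: "(\<integral>x. r' x * r' y * k x y \<partial>lborel) = r' y * (D - (R y - R0))" for y
  proof (cases "y \<in> {s..t}")
    case True
    have "(\<integral>x. r' x * r' y * k x y \<partial>lborel) = (\<integral>x. r' y * (indicator {y..t} x * r x) \<partial>lborel)"
      by (rule Bochner_Integration.integral_cong) (use True in \<open>auto simp: r'_def k_def split: split_indicator\<close>)
    also have "\<dots> = r' y * (\<integral>x. indicator {y<..t} x * r x \<partial>lborel)" by (simp add: Icc_Ioc_int[OF rm])
    also have "(\<integral>x. indicator {y<..t} x * r x \<partial>lborel) = D - (R y - R0)"
    proof -
      have i1: "integrable lborel (\<lambda>x. indicator {s..y} x * r x)"
        by (rule sub_ind[OF ri]) (use True in auto)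
      have i2: "integrable lborel (\<lambda>x. indicator {y<..t} x * r x)"
        by (rule sub_ind[OF ri]) (use True in auto)
      have "D = (\<integral>x. indicator {s..y} x * r x + indicator {y<..t} x * r x \<partial>lborel)"
        unfolding D_def r'_def
        by (rule Bochner_Integration.integral_cong) (use True in \<open>auto split: split_indicator\<close>)
      also have "\<dots> = (\<integral>x. indicator {s..y} x * r x \<partial>lborel) + (\<integral>x. indicator {y<..t} x * r x \<partial>lborel)"
        by (rule Bochner_Integration.integral_add[OF i1 i2])
      finally show ?thesis by (simp add: R_def)
    qed
    finally show ?thesis .
  next
    case False then show ?thesis by (simp add: r'_def)
  qed
  have Ii: "integrable lborel (\<lambda>x. r' x * (R x - R0))" using F(2) by (simp add: A)
  define I where "I = (\<integral>x. r' x * (R x - R0) \<partial>lborel)"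
  have "I = (\<integral>y. r' y * (D - (R y - R0)) \<partial>lborel)" using F(1) by (simp add: A B I_def)
  also have "\<dots> = (\<integral>y. D * r' y - r' y * (R y - R0) \<partial>lborel)"
    by (simp add: algebra_simps)
  also have "\<dots> = D * D - I"
    using r'i Ii by (simp add: I_def D_def)
  finally have I2: "I = D * D / 2" by simp
  have eq: "(\<lambda>x. indicator {s..t} x * (R x * r x)) = (\<lambda>x. r' x * (R x - R0) + R0 * r' x)"
    by (auto simp: fun_eq_iff r'_def algebra_simps)
  show "integrable lborel (\<lambda>x. indicator {s..t} x * (R x * r x))"
    unfolding eq using Ii r'i by auto
  have "(\<integral>x. indicator {s..t} x * (R x * r x) \<partial>lborel) = I + R0 * D"
    unfolding eq using Ii r'i by (simp add: I_def D_def)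
  also have "\<dots> = ((R t)\<^sup>2 - R0\<^sup>2) / 2" unfolding I2 RD by (simp add: power2_eq_square algebra_simps)
  finally show "(\<integral>x. indicator {s..t} x * (R x * r x) \<partial>lborel) = ((R t)\<^sup>2 - R0\<^sup>2) / 2" .
qed


lemma reflect_integrable:
  fixes K :: "real \<Rightarrow> real"
  assumes "integrable lborel K"
  shows "integrable lborel (\<lambda>y. K (x - y))"
proof -
  have "integrable lborel (\<lambda>y. K (x + (-1) * y))" by (rule lborel_integrable_real_affine[OF assms]) simp
  then show ?thesis by simp
qed

lemma reflect_integral:
  fixes K :: "real \<Rightarrow> real"
  shows "(\<integral>y. K (x - y) \<partial>lborel) = (\<integral>u. K u \<partial>lborel)"
proof -
  have "(\<integral>u. K u \<partial>lborel) = \<bar>-1\<bar> *\<^sub>R (\<integral>y. K (x + (-1) * y) \<partial>lborel)"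
    by (rule lborel_integral_real_affine) simp
  then show ?thesis by simp
qed

lemma interaction_integrable:
  fixes K \<rho> :: "real \<Rightarrow> real"
  assumes Ki: "integrable lborel K" and Kodd: "\<And>z. K (- z) = - K z"
    and rm[measurable]: "\<rho> \<in> borel_measurable borel" and r2: "integrable lborel (\<lambda>x. (\<rho> x)\<^sup>2)"
  shows "integrable (lborel \<Otimes>\<^sub>M lborel) (\<lambda>p. \<rho> (fst p) * K (fst p - snd p) * \<rho> (snd p))"
proof -
  have Km[measurable]: "K \<in> borel_measurable borel" using Ki by auto
  define f1 where "f1 p = (\<rho> (fst p))\<^sup>2 * \<bar>K (fst p - snd p)\<bar>" for p :: "real \<times> real"
  have f1m[measurable]: "f1 \<in> borel_measurable (lborel \<Otimes>\<^sub>M lborel)" unfolding f1_def by measurable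
  have I1: "integrable (lborel \<Otimes>\<^sub>M lborel) f1"
  proof (rule lborel_pair.Fubini_integrable)
    show "f1 \<in> borel_measurable (lborel \<Otimes>\<^sub>M lborel)" by (rule f1m)
    have ai: "integrable lborel (\<lambda>y. \<bar>K (x - y)\<bar>)" for x
      using reflect_integrable[OF integrable_abs[OF Ki], of x] by simp
    show "AE x in lborel. integrable lborel (\<lambda>y. f1 (x, y))"
      using ai by (simp add: f1_def)
    have "integrable lborel (\<lambda>x. (\<rho> x)\<^sup>2 * (\<integral>u. \<bar>K u\<bar> \<partial>lborel))" using r2 by auto
    moreover have "(\<integral>y. norm (f1 (x, y)) \<partial>lborel) = (\<rho> x)\<^sup>2 * (\<integral>u. \<bar>K u\<bar> \<partial>lborel)" for x
    proof -
      have "(\<integral>y. norm (f1 (x, y)) \<partial>lborel) = (\<integral>y. (\<rho> x)\<^sup>2 * \<bar>K (x - y)\<bar> \<partial>lborel)"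
        by (simp add: f1_def abs_mult)
      also have "\<dots> = (\<rho> x)\<^sup>2 * (\<integral>y. \<bar>K (x - y)\<bar> \<partial>lborel)" by simp
      also have "(\<integral>y. \<bar>K (x - y)\<bar> \<partial>lborel) = (\<integral>u. \<bar>K u\<bar> \<partial>lborel)"
        by (rule reflect_integral)
      finally show ?thesis .
    qed
    ultimately show "integrable lborel (\<lambda>x. \<integral>y. norm (f1 (x, y)) \<partial>lborel)" by simp
  qed
  have I2: "integrable (lborel \<Otimes>\<^sub>M lborel) (\<lambda>p. f1 (snd p, fst p))"
    using lborel_pair.integrable_product_swap[OF I1] by (simp add: case_prod_beta')
  have "integrable (lborel \<Otimes>\<^sub>M lborel) (\<lambda>p. f1 p / 2 + f1 (snd p, fst p) / 2)"
    using I1 I2 by auto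
  then show ?thesis
  proof (rule Bochner_Integration.integrable_bound)
    show "(\<lambda>p. \<rho> (fst p) * K (fst p - snd p) * \<rho> (snd p)) \<in> borel_measurable (lborel \<Otimes>\<^sub>M lborel)"
      by measurable
    show "AE p in lborel \<Otimes>\<^sub>M lborel. norm (\<rho> (fst p) * K (fst p - snd p) * \<rho> (snd p)) \<le> norm (f1 p / 2 + f1 (snd p, fst p) / 2)"
    proof (rule AE_I2)
      fix p :: "real \<times> real"
      obtain x y where p: "p = (x, y)" by (cases p)
      have Ks: "\<bar>K (y - x)\<bar> = \<bar>K (x - y)\<bar>" using Kodd[of "x - y"] by simp
      have "2 * \<bar>\<rho> x\<bar> * \<bar>\<rho> y\<bar> \<le> (\<rho> x)\<^sup>2 + (\<rho> y)\<^sup>2"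
        using sum_squares_bound[of "\<bar>\<rho> x\<bar>" "\<bar>\<rho> y\<bar>"] by (simp add: power2_eq_square)
      then have "\<bar>\<rho> x\<bar> * \<bar>\<rho> y\<bar> * \<bar>K (x - y)\<bar> \<le> ((\<rho> x)\<^sup>2 + (\<rho> y)\<^sup>2) / 2 * \<bar>K (x - y)\<bar>"
        by (intro mult_right_mono) auto
      moreover have "f1 p / 2 + f1 (snd p, fst p) / 2 = ((\<rho> x)\<^sup>2 + (\<rho> y)\<^sup>2) / 2 * \<bar>K (x - y)\<bar>"
        using Ks by (simp add: p f1_def algebra_simps)
      moreover have "f1 p / 2 + f1 (snd p, fst p) / 2 \<ge> 0" by (simp add: f1_def)
      ultimately show "norm (\<rho> (fst p) * K (fst p - snd p) * \<rho> (snd p)) \<le> norm (f1 p / 2 + f1 (snd p, fst p) / 2)"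
        by (simp add: p abs_mult algebra_simps)
    qed
  qed
qed

lemma interaction_pos:
  fixes K \<rho> :: "real \<Rightarrow> real"
  assumes Ki: "integrable lborel K" and Kodd: "\<And>z. K (- z) = - K z" and Kpos: "\<And>z. z < 0 \<Longrightarrow> K z > 0"
    and rm[measurable]: "\<rho> \<in> borel_measurable borel" and r2: "integrable lborel (\<lambda>x. (\<rho> x)\<^sup>2)"
    and rnn: "AE x in lborel. \<rho> x \<ge> 0"
    and mL: "emeasure lborel {x. x \<le> t \<and> \<rho> x > 0} > 0" and mR: "emeasure lborel {y. y > t \<and> \<rho> y > 0} > 0"
  shows "integrable lborel (\<lambda>x. \<rho> x * conv K \<rho> x)"
    "(\<integral>x. indicator {..t} x * (\<rho> x * conv K \<rho> x) \<partial>lborel) > 0"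
proof -
  have Km[measurable]: "K \<in> borel_measurable borel" using Ki by auto
  define H where "H p = \<rho> (fst p) * K (fst p - snd p) * \<rho> (snd p)" for p :: "real \<times> real"
  have Hm[measurable]: "H \<in> borel_measurable (lborel \<Otimes>\<^sub>M lborel)" unfolding H_def by measurable
  have HI: "integrable (lborel \<Otimes>\<^sub>M lborel) H"
    using interaction_integrable[OF Ki Kodd rm r2] by (simp add: H_def[abs_def])
  have inner: "(\<integral>y. H (x, y) \<partial>lborel) = \<rho> x * conv K \<rho> x" for x
  proof -
    have "(\<integral>y. H (x, y) \<partial>lborel) = (\<integral>y. \<rho> x * (K (x - y) * \<rho> y) \<partial>lborel)"
      by (simp add: H_def mult.assoc)
    then show ?thesis by (simp add: conv_def)
  qed
  show "integrable lborel (\<lambda>x. \<rho> x * conv K \<rho> x)"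
    using lborel_pair.integrable_fst'[OF HI] by (simp add: inner)
  define L where "L = {..t}"
  define HL where "HL p = indicator L (fst p) * H p" for p :: "real \<times> real"
  define HLL where "HLL p = indicator L (fst p) * indicator L (snd p) * H p" for p :: "real \<times> real"
  define HLR where "HLR p = indicator L (fst p) * indicator (-L) (snd p) * H p" for p :: "real \<times> real"
  have Lm[measurable]: "L \<in> sets borel" by (simp add: L_def)
  have bdI: "integrable (lborel \<Otimes>\<^sub>M lborel) (\<lambda>p. c p * H p)"
    if cm: "c \<in> borel_measurable (lborel \<Otimes>\<^sub>M lborel)" and cb: "\<And>p. \<bar>c p\<bar> \<le> 1" for c
  proof (rule Bochner_Integration.integrable_bound[OF integrable_abs[OF HI]])
    show "(\<lambda>p. c p * H p) \<in> borel_measurable (lborel \<Otimes>\<^sub>M lborel)" using cm Hm by measurable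
    show "AE p in lborel \<Otimes>\<^sub>M lborel. norm (c p * H p) \<le> norm \<bar>H p\<bar>"
      using cb by (auto simp: abs_mult intro!: AE_I2 mult_left_le_one_le)
  qed
  have HLi: "integrable (lborel \<Otimes>\<^sub>M lborel) HL"
    using bdI[of "\<lambda>p. indicator L (fst p)"] unfolding HL_def[abs_def] by (auto split: split_indicator)
  have HLLi: "integrable (lborel \<Otimes>\<^sub>M lborel) HLL"
    using bdI[of "\<lambda>p. indicator L (fst p) * indicator L (snd p)"] unfolding HLL_def[abs_def]
    by (auto split: split_indicator)
  have HLRi: "integrable (lborel \<Otimes>\<^sub>M lborel) HLR"
    using bdI[of "\<lambda>p. indicator L (fst p) * indicator (-L) (snd p)"] unfolding HLR_def[abs_def]
    by (auto split: split_indicator)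
  have J: "(\<integral>x. indicator L x * (\<rho> x * conv K \<rho> x) \<partial>lborel) = integral\<^sup>L (lborel \<Otimes>\<^sub>M lborel) HL"
  proof -
    have "(\<integral>x. indicator L x * (\<rho> x * conv K \<rho> x) \<partial>lborel) = (\<integral>x. (\<integral>y. HL (x, y) \<partial>lborel) \<partial>lborel)"
      by (simp add: HL_def inner[symmetric])
    also have "\<dots> = integral\<^sup>L (lborel \<Otimes>\<^sub>M lborel) HL" by (rule lborel_pair.integral_fst'[OF HLi])
    finally show ?thesis .
  qed
  have split: "integral\<^sup>L (lborel \<Otimes>\<^sub>M lborel) HL = integral\<^sup>L (lborel \<Otimes>\<^sub>M lborel) HLL + integral\<^sup>L (lborel \<Otimes>\<^sub>M lborel) HLR"
  proof -
    have "HL = (\<lambda>p. HLL p + HLR p)"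
      by (auto simp: fun_eq_iff HL_def HLL_def HLR_def split: split_indicator)
    then show ?thesis using HLLi HLRi by simp
  qed
  have z: "integral\<^sup>L (lborel \<Otimes>\<^sub>M lborel) HLL = 0"
  proof -
    have HLLm: "HLL \<in> borel_measurable (lborel \<Otimes>\<^sub>M lborel)" using HLLi by auto
    have "(\<lambda>(x, y). HLL (y, x)) = (\<lambda>p. - HLL p)"
    proof (rule ext)
      fix p :: "real \<times> real"
      obtain x y where p: "p = (x, y)" by (cases p)
      have "K (y - x) = - K (x - y)" using Kodd[of "x - y"] by simp
      then show "(\<lambda>(x, y). HLL (y, x)) p = - HLL p" by (simp add: p HLL_def H_def)
    qed
    then have "integral\<^sup>L (lborel \<Otimes>\<^sub>M lborel) (\<lambda>p. - HLL p) = integral\<^sup>L (lborel \<Otimes>\<^sub>M lborel) HLL"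
      using lborel_pair.integral_product_swap[OF HLLm] by simp
    then show ?thesis by simp
  qed
  have nn: "AE p in lborel \<Otimes>\<^sub>M lborel. \<rho> (fst p) \<ge> 0 \<and> \<rho> (snd p) \<ge> 0"
  proof (rule lborel_pair.AE_pair_measure)
    show "{p \<in> space (lborel \<Otimes>\<^sub>M lborel). \<rho> (fst p) \<ge> 0 \<and> \<rho> (snd p) \<ge> 0} \<in> sets (lborel \<Otimes>\<^sub>M lborel)"
      by measurable
    show "AE x in lborel. AE y in lborel. \<rho> (fst (x, y)) \<ge> 0 \<and> \<rho> (snd (x, y)) \<ge> 0"
      using rnn by eventually_elim (use rnn in \<open>auto elim: eventually_mono\<close>)
  qed
  have HLRnn: "AE p in lborel \<Otimes>\<^sub>M lborel. HLR p \<ge> 0"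
    using nn
  proof eventually_elim
    fix p :: "real \<times> real" assume a: "\<rho> (fst p) \<ge> 0 \<and> \<rho> (snd p) \<ge> 0"
    obtain x y where p: "p = (x, y)" by (cases p)
    show "HLR p \<ge> 0"
    proof (cases "x \<in> L \<and> y \<notin> L")
      case True
      then have "x - y < 0" by (auto simp: L_def)
      then have "K (x - y) > 0" by (rule Kpos)
      then show ?thesis using a True by (simp add: p HLR_def H_def)
    next
      case False then show ?thesis by (auto simp: p HLR_def split: split_indicator)
    qed
  qed
  have pos: "integral\<^sup>L (lborel \<Otimes>\<^sub>M lborel) HLR > 0"
  proof -
    have ge: "integral\<^sup>L (lborel \<Otimes>\<^sub>M lborel) HLR \<ge> 0" by (rule integral_nonneg_AE[OF HLRnn])
    have "integral\<^sup>L (lborel \<Otimes>\<^sub>M lborel) HLR \<noteq> 0"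
    proof
      assume "integral\<^sup>L (lborel \<Otimes>\<^sub>M lborel) HLR = 0"
      then have ae: "AE p in lborel \<Otimes>\<^sub>M lborel. HLR p = 0"
        using integral_nonneg_eq_0_iff_AE[OF HLRi HLRnn] by simp
      define A where "A = {x. x \<le> t \<and> \<rho> x > 0}"
      define B where "B = {y. y > t \<and> \<rho> y > 0}"
      have Am[measurable]: "A \<in> sets lborel" unfolding A_def by measurable
      have Bm[measurable]: "B \<in> sets lborel" unfolding B_def by measurable
      have "AE p in lborel \<Otimes>\<^sub>M lborel. p \<notin> A \<times> B"
        using ae
      proof eventually_elim
        fix p :: "real \<times> real" assume h0: "HLR p = 0"
        obtain x y where p: "p = (x, y)" by (cases p)
        show "p \<notin> A \<times> B"
        proof
          assume "p \<in> A \<times> B"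
          then have xy: "x \<le> t" "\<rho> x > 0" "y > t" "\<rho> y > 0" by (auto simp: p A_def B_def)
          then have "K (x - y) > 0" by (intro Kpos) simp
          then have "HLR p > 0" using xy by (simp add: p HLR_def H_def L_def)
          then show False using h0 by simp
        qed
      qed
      moreover have ABm: "A \<times> B \<in> sets (lborel \<Otimes>\<^sub>M lborel)"
        by (rule pair_measureI[OF Am Bm])
      ultimately have "A \<times> B \<in> null_sets (lborel \<Otimes>\<^sub>M lborel)"
        using AE_iff_null_sets[OF ABm] by simp
      then have "emeasure (lborel \<Otimes>\<^sub>M lborel) (A \<times> B) = 0" by auto
      moreover have "emeasure (lborel \<Otimes>\<^sub>M lborel) (A \<times> B) = emeasure lborel A * emeasure lborel B"
        using Am Bm by (intro lborel.emeasure_pair_measure_Times) auto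
      moreover have "emeasure lborel A > 0" "emeasure lborel B > 0"
        using mL mR by (auto simp: A_def B_def)
      ultimately show False by (metis mult_eq_0_iff not_gr_zero)
    qed
    with ge show ?thesis by simp
  qed
  show "(\<integral>x. indicator {..t} x * (\<rho> x * conv K \<rho> x) \<partial>lborel) > 0"
    using J split z pos by (simp add: L_def)
qed


lemma ae_exists:
  assumes ae: "AE x in lborel. P x" and ab: "a < (b::real)"
  shows "\<exists>x\<in>{a<..<b}. P x"
proof (rule ccontr)
  assume "\<not> (\<exists>x\<in>{a<..<b}. P x)"
  then have "AE x in lborel. x \<notin> {a<..<b}" using ae by (auto elim: eventually_mono)
  then have "{a<..<b} \<in> null_sets lborel" by (subst AE_iff_null_sets) auto
  then have "emeasure lborel {a<..<b} = 0" by auto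
  then show False using ab by simp
qed

lemma exists_left:
  fixes f :: "real \<Rightarrow> real"
  assumes fi: "integrable lborel f" and pos: "(\<integral>x. indicator {..t} x * f x \<partial>lborel) > 0"
  shows "\<exists>s<t. (\<integral>x. indicator {s..t} x * f x \<partial>lborel) > 0"
proof -
  have fm[measurable]: "f \<in> borel_measurable lborel" using fi by auto
  have lim: "(\<lambda>n. \<integral>x. indicator {t - real n..t} x * f x \<partial>lborel) \<longlonglongrightarrow> (\<integral>x. indicator {..t} x * f x \<partial>lborel)"
  proof (rule integral_dominated_convergence[where w="\<lambda>x. \<bar>f x\<bar>"])
    show "AE x in lborel. (\<lambda>n. indicator {t - real n..t} x * f x) \<longlonglongrightarrow> indicator {..t} x * f x"
    proof (rule AE_I2)
      fix x
      show "(\<lambda>n. indicator {t - real n..t} x * f x) \<longlonglongrightarrow> indicator {..t} x * f x"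
      proof (rule tendsto_eventually)
        obtain N :: nat where N: "t - x \<le> real N" using real_arch_simple by blast
        show "eventually (\<lambda>n. indicator {t - real n..t} x * f x = indicator {..t} x * f x) sequentially"
          unfolding eventually_sequentially
          by (rule exI[of _ N]) (use N in \<open>auto split: split_indicator\<close>)
      qed
    qed
    show "AE x in lborel. norm (indicator {t - real n..t} x * f x) \<le> \<bar>f x\<bar>" for n
      by (auto split: split_indicator)
  qed (use fi in auto)
  show ?thesis
  proof (rule ccontr)
    assume neg: "\<not> ?thesis"
    have "(\<integral>x. indicator {t - real n..t} x * f x \<partial>lborel) \<le> 0" for n
    proof (cases "n = 0")
      case True
      have "(\<lambda>x. indicator {t..t} x * f x) = (\<lambda>x. indicator {t} x * f x)" by simp
      moreover have "(\<integral>x. indicator {t} x * f x \<partial>lborel) = 0"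
        by (rule integral_eq_zero_AE) (auto intro!: eventually_mono[OF AE_lborel_singleton[of t]])
      ultimately show ?thesis using True by simp
    next
      case False
      then have "t - real n < t" by simp
      then show ?thesis using neg by (meson not_less)
    qed
    then have "(\<integral>x. indicator {..t} x * f x \<partial>lborel) \<le> 0"
      by (intro LIMSEQ_le_const2[OF lim]) auto
    then show False using pos by simp
  qed
qed

theorem lemma4p1:
  fixes \<epsilon> :: real and G g g' :: "real \<Rightarrow> real" and g2 :: real
    and \<rho> w :: "real \<Rightarrow> real"
  assumes eps: "\<epsilon> > 0"
    and G_nonneg: "\<And>x. G x \<ge> 0"
    and G_supp: "closure {x. G x \<noteq> 0} = UNIV"
    and G_C2: "\<And>x. G differentiable (at x)" "\<And>x. deriv G differentiable (at x)"
              "continuous_on UNIV (deriv (deriv G))"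
    and G_W11: "integrable lborel G" "integrable lborel (deriv G)"
    and G_Linf: "bounded (range G)"
    and G_radial: "\<And>x. G x = g \<bar>x\<bar>"
    and g_deriv: "\<And>r. r \<ge> 0 \<Longrightarrow> (g has_real_derivative g' r) (at r within {0..})"
    and g'_neg: "\<And>r. r > 0 \<Longrightarrow> g' r < 0"
    and g2_def: "(g' has_real_derivative g2) (at 0 within {0..})"
    and g2_neg: "g2 < 0"
    and g_lim: "(g \<longlongrightarrow> 0) at_top"
    and G_mass: "(LINT x|lborel. G x) = 1"
    and rho_meas: "\<rho> \<in> borel_measurable lborel"
    and rho_nonneg: "AE x in lborel. \<rho> x \<ge> 0"
    and rho_L1: "integrable lborel \<rho>"
    and rho_mass: "(LINT x|lborel. \<rho> x) = 1"
    and rho_L2: "integrable lborel (\<lambda>x. (\<rho> x)\<^sup>2)"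
    and w_weak: "weak_deriv (\<lambda>x. \<epsilon> * \<rho> x - conv G \<rho> x) w"
    and stationary: "AE x in lborel. \<rho> x * w x = 0"
  shows "connected (esssupp \<rho>)"
proof (rule ccontr)
  assume nc: "\<not> connected (esssupp \<rho>)"
  have Gd: "\<And>x. (G has_real_derivative deriv G x) (at x)"
    using G_C2(1) DERIV_deriv_iff_real_differentiable by blast
  have G'c: "continuous_on UNIV (deriv G)"
    by (intro continuous_at_imp_continuous_on ballI differentiable_imp_continuous_within G_C2(2))
  obtain B where Gb: "\<And>x. \<bar>G x\<bar> \<le> B"
    using G_Linf unfolding bounded_iff by auto
  have Geven: "G (- x) = G x" for x using G_radial[of x] G_radial[of "-x"] by simp
  have Kodd: "deriv G (- z) = - deriv G z" for z
  proof -
    have l: "((\<lambda>x. - x) has_real_derivative - 1) (at z)" by (auto intro!: derivative_eq_intros)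
    have "((\<lambda>x. G (- x)) has_real_derivative deriv G (- z) * (- 1)) (at z)"
      by (rule DERIV_chain2[OF Gd l])
    moreover have "(\<lambda>x. G (- x)) = G" by (rule ext) (rule Geven)
    ultimately have "(G has_real_derivative - deriv G (- z)) (at z)" by simp
    from DERIV_unique[OF Gd this] show ?thesis by simp
  qed
  have Kpos: "deriv G z > 0" if z: "z < 0" for z
  proof -
    have "(g has_real_derivative g' (- z)) (at (- z) within {0..})" using g_deriv[of "- z"] z by simp
    moreover have "at (- z) within {0..} = at (- z)" using z by (intro at_within_interior) auto
    ultimately have gd: "(g has_real_derivative g' (- z)) (at (- z))" by simp
    have l: "((\<lambda>x. - x) has_real_derivative - 1) (at z)" by (auto intro!: derivative_eq_intros)
    have "((\<lambda>y. g (- y)) has_real_derivative g' (- z) * (- 1)) (at z)"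
      by (rule DERIV_chain2[OF gd l])
    then have "((\<lambda>y. g (- y)) has_real_derivative - g' (- z)) (at z)" by simp
    moreover have "\<And>y. y \<in> {..<0} \<Longrightarrow> g (- y) = G y" using G_radial by simp
    ultimately have "(G has_real_derivative - g' (- z)) (at z)"
      using has_field_derivative_transform_within_open[of "\<lambda>y. g (- y)" "- g' (- z)" z "{..<0}" G] z by auto
    then have "deriv G z = - g' (- z)" using DERIV_unique[OF Gd] by blast
    moreover have "g' (- z) < 0" using g'_neg[of "- z"] z by simp
    ultimately show ?thesis by simp
  qed
  have G'i: "integrable lborel (deriv G)" by (rule G_W11(2))
  have G'm[measurable]: "deriv G \<in> borel_measurable borel" using G'c by (simp add: borel_measurable_continuous_onI)
  have rm[measurable]: "\<rho> \<in> borel_measurable borel" using rho_meas by simp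
  have um: "(\<lambda>x. \<epsilon> * \<rho> x - conv G \<rho> x) \<in> borel_measurable lborel"
    and ui: "\<And>K. compact K \<Longrightarrow> set_integrable lborel K (\<lambda>x. \<epsilon> * \<rho> x - conv G \<rho> x)"
    and wm[measurable]: "w \<in> borel_measurable lborel"
    and wi: "\<And>K. compact K \<Longrightarrow> set_integrable lborel K w"
    and weak: "\<And>\<phi>. test_fun \<phi> \<Longrightarrow> (LINT x|lborel. (\<epsilon> * \<rho> x - conv G \<rho> x) * deriv \<phi> x) = - (LINT x|lborel. w x * \<phi> x)"
    using w_weak unfolding weak_deriv_def locally_integrable_def by auto
  let ?S = "esssupp \<rho>"
  obtain p q t0 where pS: "p \<in> ?S" and qS: "q \<in> ?S" and pt: "p \<le> t0" and tq: "t0 \<le> q" and tS: "t0 \<notin> ?S"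
    using nc unfolding connected_iff_interval by blast
  have notin: "x \<notin> ?S" if "open V" "AE y in lborel. y \<in> V \<longrightarrow> \<rho> y = 0" "x \<in> V" for V x
    using that unfolding esssupp_def by blast
  obtain U where U: "open U" "AE y in lborel. y \<in> U \<longrightarrow> \<rho> y = 0" "t0 \<in> U"
    using tS unfolding esssupp_def by blast
  obtain e where e: "e > 0" "ball t0 e \<subseteq> U" using U(1,3) openE by blast
  have pt': "p < t0" using pt pS tS by (cases "p = t0") auto
  have tq': "t0 < q" using tq qS tS by (cases "q = t0") auto
  define d where "d = min e (min (t0 - p) (q - t0)) / 2"
  have d0: "d > 0" using e pt' tq' by (simp add: d_def)
  define t1 where "t1 = t0 - d"
  define t2 where "t2 = t0 + d"
  have dle: "d \<le> (t0 - p) / 2" "d \<le> (q - t0) / 2" "d < e"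
    using e pt' tq' by (auto simp: d_def min_def)
  have pt1: "p < t1" and t2q: "t2 < q" and t12: "t1 < t2"
    using d0 dle pt' tq' by (auto simp: t1_def t2_def)
  have gap_sub: "{t1..t2} \<subseteq> U"
  proof
    fix x assume "x \<in> {t1..t2}"
    then have "dist t0 x < e" using d0 dle by (auto simp: t1_def t2_def dist_real_def)
    then show "x \<in> U" using e(2) by auto
  qed
  have gap: "AE x in lborel. t1 \<le> x \<and> x \<le> t2 \<longrightarrow> \<rho> x = 0"
    using U(2) by eventually_elim (use gap_sub in auto)
  have mL: "emeasure lborel {x. x \<le> t1 \<and> \<rho> x > 0} > 0"
  proof (rule ccontr)
    assume "\<not> ?thesis"
    then have "emeasure lborel {x. x \<le> t1 \<and> \<rho> x > 0} = 0" by (simp add: not_gr_zero)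
    moreover have mm: "{x. x \<le> t1 \<and> \<rho> x > 0} \<in> sets lborel" by measurable
    ultimately have "{x. x \<le> t1 \<and> \<rho> x > 0} \<in> null_sets lborel" by auto
    then have "AE x in lborel. x \<notin> {x. x \<le> t1 \<and> \<rho> x > 0}" using AE_iff_null_sets[OF mm] by simp
    then have "AE x in lborel. x \<in> {..<t1} \<longrightarrow> \<rho> x = 0" using rho_nonneg by eventually_elim auto
    then have "p \<notin> ?S" using pt1 by (intro notin[of "{..<t1}"]) auto
    then show False using pS by simp
  qed
  have mR: "emeasure lborel {y. y > t1 \<and> \<rho> y > 0} > 0"
  proof (rule ccontr)
    assume "\<not> ?thesis"
    then have "emeasure lborel {y. y > t1 \<and> \<rho> y > 0} = 0" by (simp add: not_gr_zero)
    moreover have mm: "{y. y > t1 \<and> \<rho> y > 0} \<in> sets lborel" by measurable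
    ultimately have "{y. y > t1 \<and> \<rho> y > 0} \<in> null_sets lborel" by auto
    then have "AE x in lborel. x \<notin> {y. y > t1 \<and> \<rho> y > 0}" using AE_iff_null_sets[OF mm] by simp
    then have "AE x in lborel. x \<in> {t1<..} \<longrightarrow> \<rho> x = 0" using rho_nonneg by eventually_elim auto
    then have "q \<notin> ?S" using pt1 t12 t2q by (intro notin[of "{t1<..}"]) auto
    then show False using qS by simp
  qed
  define F1 where "F1 = conv (deriv G) \<rho>"
  note IP = interaction_pos[OF G'i Kodd Kpos rm rho_L2 rho_nonneg mL mR]
  have F1i: "integrable lborel (\<lambda>x. \<rho> x * F1 x)" using IP(1) by (simp add: F1_def)
  obtain s where st1: "s < t1" and Jpos: "(\<integral>x. indicator {s..t1} x * (\<rho> x * F1 x) \<partial>lborel) > 0"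
    using exists_left[OF F1i] IP(2) unfolding F1_def by blast
  obtain c where Ac: "AE x in lborel. x > s \<longrightarrow> \<epsilon> * \<rho> x - conv G \<rho> x = c + (\<integral>y. indicator {s..x} y * w y \<partial>lborel)"
    using stepA[OF um ui wm wi weak, of s] by blast
  have F1m[measurable]: "F1 \<in> borel_measurable lborel"
    unfolding F1_def conv_def by measurable
  define r where "r x = w x + F1 x" for x
  have rm'[measurable]: "r \<in> borel_measurable borel" unfolding r_def by measurable
  define R0 where "R0 = c + conv G \<rho> s"
  have rI: "integrable lborel (\<lambda>y. indicator {s..x} y * r y)"
    "(\<integral>y. indicator {s..x} y * r y \<partial>lborel) = (\<integral>y. indicator {s..x} y * w y \<partial>lborel) + (\<integral>y. indicator {s..x} y * F1 y \<partial>lborel)"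
    "conv G \<rho> x - conv G \<rho> s = (\<integral>y. indicator {s..x} y * F1 y \<partial>lborel)"
    if sx: "s \<le> x" for x
  proof -
    have i1: "integrable lborel (\<lambda>y. indicator {s..x} y * w y)"
      using wi[of "{s..x}"] unfolding set_integrable_def by simp
    have i2: "integrable lborel (\<lambda>y. indicator {s..x} y * F1 y)"
      using stepB(1)[OF Gd G'c G'i Gb rho_L1 sx] by (simp add: F1_def)
    show "integrable lborel (\<lambda>y. indicator {s..x} y * r y)"
      using i1 i2 by (simp add: r_def distrib_left)
    show "(\<integral>y. indicator {s..x} y * r y \<partial>lborel) = (\<integral>y. indicator {s..x} y * w y \<partial>lborel) + (\<integral>y. indicator {s..x} y * F1 y \<partial>lborel)"
      using i1 i2 by (simp add: r_def distrib_left)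
    show "conv G \<rho> x - conv G \<rho> s = (\<integral>y. indicator {s..x} y * F1 y \<partial>lborel)"
      using stepB(2)[OF Gd G'c G'i Gb rho_L1 sx] by (simp add: F1_def)
  qed
  define R where "R x = R0 + (\<integral>y. indicator {s..x} y * r y \<partial>lborel)" for x
  have eqR: "AE x in lborel. x > s \<longrightarrow> \<epsilon> * \<rho> x = R x"
    using Ac
  proof eventually_elim
    fix x assume h: "x > s \<longrightarrow> \<epsilon> * \<rho> x - conv G \<rho> x = c + (\<integral>y. indicator {s..x} y * w y \<partial>lborel)"
    show "x > s \<longrightarrow> \<epsilon> * \<rho> x = R x"
    proof
      assume xs: "x > s"
      then have "s \<le> x" by simp
      from rI[OF this] h xs show "\<epsilon> * \<rho> x = R x" by (simp add: R_def R0_def algebra_simps)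
    qed
  qed
  obtain t where t: "t \<in> {t1<..<t2}" "(t1 \<le> t \<and> t \<le> t2 \<longrightarrow> \<rho> t = 0) \<and> (t > s \<longrightarrow> \<epsilon> * \<rho> t = R t)"
    using ae_exists[OF AE_conjI[OF gap eqR] t12] by blast
  have st: "s < t" using t(1) st1 by simp
  have Rt: "R t = 0" using t st by auto
  note CR = chain_rule[OF rI(1)[of t] _ rm', of R0]
  have CR2: "(\<integral>x. indicator {s..t} x * (R x * r x) \<partial>lborel) = ((R t)\<^sup>2 - R0\<^sup>2) / 2"
    using CR(2) st by (simp add: R_def)
  have Rm[measurable]: "R \<in> borel_measurable lborel"
  proof -
    have "(\<lambda>x. \<integral>y. indicator {s..x} y * r y \<partial>lborel) \<in> borel_measurable lborel"
      by (rule W_meas) simp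
    then show ?thesis unfolding R_def[abs_def] by measurable
  qed
  have CRE: "(\<integral>x. indicator {s..t} x * (R x * r x) \<partial>lborel) = (\<integral>x. \<epsilon> * (indicator {s..t} x * (\<rho> x * F1 x)) \<partial>lborel)"
  proof (rule integral_cong_AE)
    show "AE x in lborel. indicator {s..t} x * (R x * r x) = \<epsilon> * (indicator {s..t} x * (\<rho> x * F1 x))"
      using eqR stationary AE_lborel_singleton[of s]
    proof eventually_elim
      fix x assume h: "x > s \<longrightarrow> \<epsilon> * \<rho> x = R x" "\<rho> x * w x = 0" "x \<noteq> s"
      show "indicator {s..t} x * (R x * r x) = \<epsilon> * (indicator {s..t} x * (\<rho> x * F1 x))"
      proof (cases "x \<in> {s..t}")
        case True
        then have "R x = \<epsilon> * \<rho> x" using h by auto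
        then have "R x * r x = \<epsilon> * (\<rho> x * w x) + \<epsilon> * (\<rho> x * F1 x)"
          by (simp add: r_def algebra_simps)
        then show ?thesis using True h(2) by simp
      qed simp
    qed
  qed auto
  have I1: "integrable lborel (\<lambda>x. indicator A x * (\<rho> x * F1 x))" if "A \<in> sets borel" for A
    using integrable_mult_indicator[OF _ F1i, of A] that by simp
  have split2: "(\<integral>x. indicator {s..t} x * (\<rho> x * F1 x) \<partial>lborel)
      = (\<integral>x. indicator {s..t1} x * (\<rho> x * F1 x) \<partial>lborel) + (\<integral>x. indicator {t1<..t} x * (\<rho> x * F1 x) \<partial>lborel)"
  proof -
    have "(\<lambda>x. indicator {s..t} x * (\<rho> x * F1 x)) = (\<lambda>x. indicator {s..t1} x * (\<rho> x * F1 x) + indicator {t1<..t} x * (\<rho> x * F1 x))"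
      using st1 t(1) by (auto simp: fun_eq_iff split: split_indicator)
    then show ?thesis using I1[of "{s..t1}"] I1[of "{t1<..t}"] by simp
  qed
  have zero2: "(\<integral>x. indicator {t1<..t} x * (\<rho> x * F1 x) \<partial>lborel) = 0"
  proof (rule integral_eq_zero_AE)
    show "AE x in lborel. indicator {t1<..t} x * (\<rho> x * F1 x) = 0"
      using gap by eventually_elim (use t(1) in \<open>auto split: split_indicator\<close>)
  qed
  have "(\<integral>x. \<epsilon> * (indicator {s..t} x * (\<rho> x * F1 x)) \<partial>lborel) > 0"
    using split2 zero2 Jpos eps by simp
  moreover have "((R t)\<^sup>2 - R0\<^sup>2) / 2 \<le> 0" using Rt by simp
  ultimately show False using CR2 CRE by simp
qed

end
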